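(* Let $d(n)$ be the number of cubes of $\mathbb{T}$ ending at position $n$. For $m\ge7$ let $\Gamma_{m,1}$ be the integer interval (increasing vector) $[\frac{t_{m}+t_{m-2}-1}{2},\dots,\frac{t_{m+1}+t_{m-1}-3}{2}]$, and for a vector $V=[v_1,\dots,v_r]$ write $d(V)=[d(v_1),\dots,d(v_r)]$. Then $d(n)=0$ for $n\leq51$, and \begin{align*} d(\Gamma_{7,1})&=d([52,\dots,95])=[\underbrace{0,\dots,0}_6,1,\underbrace{0,\dots,0}_{37}];\\ d(\Gamma_{8,1})&=d([96,\dots,176])=[\underbrace{0,\dots,0}_{11},1,1,\underbrace{0,\dots,0}_{30},1,\underbrace{0,\dots,0}_{37}];\\ d(\Gamma_{9,1})&=d([177,\dots,325])=[\underbrace{0,\dots,0}_{20},\underbrace{1,\dots,1}_4,\underbrace{0,\dots,0}_{6},1,\underbrace{0,\dots,0}_{48},1,1,\underbrace{0,\dots,0}_{30},1,\underbrace{0,\dots,0}_{37}]; \end{align*} and for $m\geq10$ (juxtaposition denoting concatenation of vectors and $+$ coordinatewise addition) $$d(\Gamma_{m,1})=[d(\Gamma_{m-3,1}),d(\Gamma_{m-2,1}),d(\Gamma_{m-1,1})]+[\underbrace{0,\dots,0,}_{\frac{-t_{m-2}+5t_{m-4}+1}{2}}\underbrace{1,\dots,1,}_{\frac{t_{m-2}-3t_{m-4}-1}{2}}\underbrace{0,\dots,0}_{t_{m-2}+t_{m-3}}].$$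
   Context: The Tribonacci sequence $\mathbb{T}=x_1x_2x_3\cdots$ is the fixed point (infinite word starting with $a$) of the substitution $\sigma(a)=ab$, $\sigma(b)=ac$, $\sigma(c)=a$ over $\{a,b,c\}$. The Tribonacci numbers are $t_m=|\sigma^m(a)|$ for $m\ge0$, with $t_{-2}=0$, $t_{-1}=1$; thus $t_0=1,t_1=2,t_2=4$ and $t_m=t_{m-1}+t_{m-2}+t_{m-3}$. For a nonempty factor $\omega$ of $\mathbb{T}$ and $p\ge1$, $\omega_p$ denotes the $p$-th occurrence of $\omega$ in $\mathbb{T}$ (occurrences ordered by starting position). A cube is a pair $(\omega,p)$ such that $\omega_{p+1}$ begins immediately after $\omega_p$ ends and $\omega_{p+2}$ begins immediately after $\omega_{p+1}$ ends (i.e. $\omega_p\omega_{p+1}\omega_{p+2}$ is a factor of $\mathbb{T}$); it ends at position $n$ if the last letter of $\omega_{p+2}$ is at position $n$. Thus $d(n)=\#\{(\omega,p):\omega_p\omega_{p+1}\omega_{p+2}\text{ ends at position }n\}$. *)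

theory Defs
  imports Main
begin

datatype letter = LA | LB | LC

fun sig :: "letter \<Rightarrow> letter list" where
  "sig LA = [LA, LB]"
| "sig LB = [LA, LC]"
| "sig LC = [LA]"

definition sigma :: "letter list \<Rightarrow> letter list" where
  "sigma w = concat (map sig w)"

definition trib :: "nat \<Rightarrow> nat" where
  "trib m = length ((sigma ^^ m) [LA])"

text \<open>The Tribonacci word, positions numbered from 1: x_n is the n-th letter of
  sigma^n(a) (a prefix of the fixed point, of length t_n > n).\<close>
definition tw :: "nat \<Rightarrow> letter" where
  "tw n = ((sigma ^^ n) [LA]) ! (n - 1)"

definition occurs_at :: "letter list \<Rightarrow> nat \<Rightarrow> bool" where
  "occurs_at w i \<longleftrightarrow> 1 \<le> i \<and> (\<forall>k < length w. tw (i + k) = w ! k)"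

definition nth_occ :: "letter list \<Rightarrow> nat \<Rightarrow> nat \<Rightarrow> bool" where
  "nth_occ w p i \<longleftrightarrow> 1 \<le> p \<and> occurs_at w i \<and> card {j. j < i \<and> occurs_at w j} = p - 1"

definition cube_ending_at :: "letter list \<Rightarrow> nat \<Rightarrow> nat \<Rightarrow> bool" where
  "cube_ending_at w p n \<longleftrightarrow> w \<noteq> [] \<and>
     (\<exists>i. nth_occ w p i \<and> nth_occ w (p + 1) (i + length w) \<and>
          nth_occ w (p + 2) (i + 2 * length w) \<and> i + 3 * length w - 1 = n)"

definition dcube :: "nat \<Rightarrow> nat" where
  "dcube n = card {(w, p). cube_ending_at w p n}"

definition gamma_lo :: "nat \<Rightarrow> nat" where
  "gamma_lo m = (trib m + trib (m - 2) - 1) div 2"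

definition gamma_hi :: "nat \<Rightarrow> nat" where
  "gamma_hi m = (trib (m + 1) + trib (m - 1) - 3) div 2"

definition Gamma1 :: "nat \<Rightarrow> nat list" where
  "Gamma1 m = [gamma_lo m ..< gamma_hi m + 1]"

definition dvec :: "nat list \<Rightarrow> nat list" where
  "dvec V = map dcube V"

end

theory Submission
  imports Defs "HOL-Library.Sublist"
begin


lemma sigma_Nil[simp]: "sigma [] = []" by (simp add: sigma_def)
lemma sigma_Cons[simp]: "sigma (x # xs) = sig x @ sigma xs" by (simp add: sigma_def)
lemma sigma_append[simp]: "sigma (xs @ ys) = sigma xs @ sigma ys" by (simp add: sigma_def)

lemma sigma_pow_append: "(sigma ^^ j) (xs @ ys) = (sigma ^^ j) xs @ (sigma ^^ j) ys"
  by (induction j) auto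

definition P :: "nat \<Rightarrow> letter list" where "P j = (sigma ^^ j) [LA]"

lemma trib_P: "trib j = length (P j)" by (simp add: trib_def P_def)

lemma P_0: "P 0 = [LA]" and P_1: "P 1 = [LA,LB]" and P_2: "P 2 = [LA,LB,LA,LC]"
  and P_3: "P 3 = [LA,LB,LA,LC,LA,LB,LA]"
  by (simp_all add: P_def numeral_eq_Suc)

lemma P_rec: "P (j+3) = P (j+2) @ P (j+1) @ P j"
proof -
  have "P (j+3) = (sigma ^^ j) (P 3)" unfolding P_def by (simp only: funpow_add o_apply)
  also have "P 3 = P 2 @ P 1 @ P 0" by (simp add: P_def numeral_eq_Suc)
  also have "(sigma ^^ j) (P 2 @ P 1 @ P 0) = P (j+2) @ P (j+1) @ P j"
    unfolding sigma_pow_append P_def by (simp only: funpow_add o_apply funpow_0)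
  finally show ?thesis .
qed

lemma trib_0[simp]: "trib 0 = 1" and trib_1[simp]: "trib 1 = 2" and trib_2[simp]: "trib 2 = 4"
  by (simp_all add: trib_P P_0 P_1 P_2 del: One_nat_def)

lemma trib_Suc0[simp]: "trib (Suc 0) = 2" and trib_SS0[simp]: "trib (Suc (Suc 0)) = 4"
  using trib_1 trib_2 by (simp_all only: One_nat_def numeral_2_eq_2)

lemma trib_rec: "trib (j+3) = trib (j+2) + trib (j+1) + trib j"
  by (simp add: trib_P P_rec)

lemma trib_rec_at: "a = j + 3 \<Longrightarrow> b = j + 2 \<Longrightarrow> c = j + 1 \<Longrightarrow> trib a = trib b + trib c + trib j"
  using trib_rec by simp

lemma P_Suc: "P (Suc j) = sigma (P j)" by (simp add: P_def)

lemma P_prefix_Suc: "prefix (P j) (P (Suc j))"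
proof -
  have "P (Suc j) = (sigma ^^ j) [LA, LB]" by (simp add: P_def funpow_Suc_right del: funpow.simps)
  also have "\<dots> = P j @ (sigma ^^ j) [LB]" using sigma_pow_append[of j "[LA]" "[LB]"] by (simp add: P_def)
  finally show ?thesis by (simp add: prefixI)
qed

lemma P_prefix: "j \<le> k \<Longrightarrow> prefix (P j) (P k)"
proof (induction k)
  case 0 thus ?case by simp
next
  case (Suc k)
  show ?case
  proof (cases "j = Suc k")
    case True thus ?thesis by simp
  next
    case False with Suc show ?thesis using P_prefix_Suc prefix_order.trans by (metis le_SucE)
  qed
qed

lemma trib_mono: "j \<le> k \<Longrightarrow> trib j \<le> trib k"
  using P_prefix prefix_length_le trib_P by metis

lemma trib_pos: "trib j \<ge> 1"
  using trib_mono[of 0 j] by simp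

lemma trib_ge: "trib j \<ge> j + 1"
proof (induction j rule: less_induct)
  case (less j)
  show ?case
  proof (cases "j < 3")
    case True thus ?thesis using trib_1 trib_2 by (auto simp: less_Suc_eq numeral_eq_Suc simp del: trib_1 trib_2)
  next
    case False
    then obtain i where "j = i + 3" by (metis add.commute le_Suc_ex not_less)
    thus ?thesis using less[of "i+2"] trib_rec[of i] trib_pos[of i] trib_pos[of "i+1"] by simp
  qed
qed

lemma tw_P: assumes "1 \<le> n" "n \<le> trib j" shows "tw n = P j ! (n - 1)"
proof -
  have a: "n - 1 < length (P n)" using trib_ge[of n] trib_P assms by simp
  have b: "n - 1 < length (P j)" using trib_P assms by simp
  show ?thesis
  proof (cases "n \<le> j")
    case True
    then obtain z where "P j = P n @ z" using P_prefix by (metis prefixE)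
    thus ?thesis using a by (simp add: tw_def P_def[symmetric] nth_append)
  next
    case False
    then obtain z where "P n = P j @ z" using P_prefix by (metis prefixE nat_le_linear)
    thus ?thesis using b by (simp add: tw_def P_def[symmetric] nth_append)
  qed
qed

definition fac :: "nat \<Rightarrow> nat \<Rightarrow> letter list" where "fac i n = map tw [i..<i+n]"

lemma fac_length[simp]: "length (fac i n) = n" by (simp add: fac_def)
lemma fac_nth: "k < n \<Longrightarrow> fac i n ! k = tw (i + k)" by (simp add: fac_def)
lemma fac_add: "fac i (m + n) = fac i m @ fac (i+m) n"
  unfolding fac_def using upt_add_eq_append[of i "i+m" n] by (simp add: add.assoc)
lemma fac_0[simp]: "fac i 0 = []" by (simp add: fac_def)
lemma fac_Suc: "fac i (Suc n) = fac i n @ [tw (i+n)]" by (simp add: fac_def)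

lemma fac_P: assumes "n \<le> trib j" shows "fac 1 n = take n (P j)"
proof (rule nth_equalityI)
  fix i assume "i < length (fac 1 n)"
  thus "fac 1 n ! i = take n (P j) ! i" using assms tw_P[of "Suc i" j] by (simp add: fac_nth)
qed (use assms trib_P in auto)

definition S :: "nat \<Rightarrow> nat" where "S n = length (sigma (fac 1 n))"

lemma sigma_fac1: "sigma (fac 1 n) = fac 1 (S n)"
proof -
  obtain j where j: "n \<le> trib j" using trib_ge[of n] by (metis Suc_eq_plus1 Suc_leD)
  have "prefix (fac 1 n) (P j)" using fac_P[OF j] by (simp add: take_is_prefix)
  then obtain z where "P j = fac 1 n @ z" by (metis prefixE)
  hence e: "P (Suc j) = sigma (fac 1 n) @ sigma z" by (simp add: P_Suc)
  have "S n \<le> trib (Suc j)" by (simp add: S_def trib_P e)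
  hence "fac 1 (S n) = take (S n) (P (Suc j))" by (rule fac_P)
  thus ?thesis by (simp add: e S_def)
qed




lemma len_sig: "length (sig l) = (if l = LC then 1 else 2)" by (cases l) auto

lemma S_0[simp]: "S 0 = 0" by (simp add: S_def)
lemma S_Suc: "S (Suc n) = S n + length (sig (tw (Suc n)))"
  by (simp add: S_def fac_Suc)

lemma S_mono_Suc: "S n < S (Suc n)" by (simp add: S_Suc len_sig)
lemma S_strict_mono: "strict_mono S" unfolding strict_mono_Suc_iff using S_mono_Suc by blast
lemma S_less_iff[simp]: "S m < S n \<longleftrightarrow> m < n" using S_strict_mono strict_mono_less by blast
lemma S_le_iff[simp]: "S m \<le> S n \<longleftrightarrow> m \<le> n" using S_strict_mono strict_mono_less_eq by blast
lemma S_inj: "S m = S n \<longleftrightarrow> m = n" using S_strict_mono strict_mono_eq by blast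
lemma S_ge: "n \<le> S n" by (induction n) (auto simp: S_Suc len_sig)

lemma sigma_fac1_Suc: "fac 1 (S (Suc q)) = fac 1 (S q) @ sig (tw (Suc q))"
  using sigma_fac1[of "Suc q"] sigma_fac1[of q] by (simp add: fac_Suc)

lemma tw_block: assumes "r < length (sig (tw (Suc q)))" shows "tw (S q + 1 + r) = sig (tw (Suc q)) ! r"
proof -
  have "fac 1 (S (Suc q)) ! (S q + r) = tw (S q + 1 + r)"
    using assms by (simp add: fac_nth S_Suc)
  thus ?thesis using sigma_fac1_Suc[of q] by (simp add: nth_append)
qed

lemma tw_block_start: "tw (S q + 1) = LA"
  using tw_block[of 0 q] by (cases "tw (Suc q)") (auto simp: len_sig)

lemma tw_block_second: "tw (S q + 2) = (case tw (Suc q) of LA \<Rightarrow> LB | LB \<Rightarrow> LC | LC \<Rightarrow> LA)"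
proof (cases "tw (Suc q)")
  case LC
  hence "S (Suc q) = S q + 1" by (simp add: S_Suc)
  thus ?thesis using tw_block_start[of "Suc q"] LC by simp
qed (use tw_block[of 1 q] in \<open>auto simp: len_sig\<close>)

lemma tw_block_letter: "tw (Suc q) = (case tw (S q + 2) of LB \<Rightarrow> LA | LC \<Rightarrow> LB | LA \<Rightarrow> LC)"
  by (cases "tw (Suc q)") (use tw_block_second[of q] in auto)

lemma block_exists: assumes "1 \<le> p" shows "\<exists>q. S q < p \<and> p \<le> S (Suc q)"
proof -
  define q where "q = (GREATEST q. S q < p)"
  have b: "\<forall>y. S y < p \<longrightarrow> y \<le> p" using S_ge by (metis le_trans less_imp_le)
  have ex: "S 0 < p" using assms by simp
  have "S q < p" unfolding q_def by (rule GreatestI_nat[where P="\<lambda>q. S q < p", OF ex]) (use b in auto)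
  moreover have "\<not> S (Suc q) < p"
  proof
    assume "S (Suc q) < p"
    hence "Suc q \<le> q" unfolding q_def by (rule Greatest_le_nat[where P="\<lambda>q. S q < p"]) (use b in auto)
    thus False by simp
  qed
  ultimately show ?thesis by auto
qed

lemma block_offset: assumes "S q < p" "p \<le> S (Suc q)"
  shows "p = S q + 1 \<or> (p = S q + 2 \<and> S (Suc q) = S q + 2 \<and> tw (Suc q) \<noteq> LC)"
  using assms by (auto simp: S_Suc len_sig split: if_splits)

lemma tw_A_block: assumes "tw p = LA" "1 \<le> p" shows "\<exists>q. p = S q + 1"
proof -
  obtain q where q: "S q < p" "p \<le> S (Suc q)" using block_exists assms by blast
  from block_offset[OF q] show ?thesis
  proof
    assume h: "p = S q + 2 \<and> S (Suc q) = S q + 2 \<and> tw (Suc q) \<noteq> LC"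
    hence "tw p \<noteq> LA" using tw_block_second[of q] by (cases "tw (Suc q)") auto
    with assms show ?thesis by simp
  qed blast
qed

lemma tw_notA: assumes "tw p \<noteq> LA" "1 \<le> p"
  shows "\<exists>q. p = S q + 2 \<and> S (Suc q) = S q + 2 \<and> tw (Suc q) \<noteq> LC"
proof -
  obtain q where q: "S q < p" "p \<le> S (Suc q)" using block_exists assms by blast
  from block_offset[OF q] assms show ?thesis using tw_block_start[of q] by auto
qed

lemma tw_notA_next: assumes "tw p \<noteq> LA" "1 \<le> p" shows "tw (p+1) = LA"
  using tw_notA[OF assms] tw_block_start by (metis add_2_eq_Suc' add_Suc_right)

lemma tw_notA_prev: assumes "tw p \<noteq> LA" "1 \<le> p" shows "2 \<le> p \<and> tw (p-1) = LA"
  using tw_notA[OF assms] tw_block_start by fastforce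

lemma tw_0: "tw 0 = LA" by (simp add: tw_def)
lemma tw_1: "tw 1 = LA" by (simp add: tw_def P_1[unfolded P_def])

lemma tw_notA_next': "tw p \<noteq> LA \<Longrightarrow> tw (Suc p) = LA"
  using tw_notA_next tw_0 by (cases p) auto

lemma no_cc: "tw q = LC \<Longrightarrow> tw (Suc q) \<noteq> LC"
  using tw_notA_next' by auto

lemma no_aaa: assumes "tw p = LA" "tw (p+1) = LA" "1 \<le> p" shows "tw (p+2) \<noteq> LA"
proof
  assume h: "tw (p+2) = LA"
  obtain q where q: "p = S q + 1" using tw_A_block assms by blast
  have c1: "tw (Suc q) = LC" using tw_block_second[of q] assms(2) q
    by (cases "tw (Suc q)") auto
  hence sq: "S (Suc q) = S q + 1" by (simp add: S_Suc)
  have "tw (Suc (Suc q)) = LC" using tw_block_second[of "Suc q"] h q sq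
    by (cases "tw (Suc (Suc q))") auto
  with c1 no_cc show False by blast
qed

lemma sigma_fac: "sigma (fac (x+1) n) = fac (S x + 1) (S (x+n) - S x)"
proof -
  have "fac 1 (x + n) = fac 1 x @ fac (x+1) n" by (simp add: fac_add)
  hence "fac 1 (S (x+n)) = fac 1 (S x) @ sigma (fac (x+1) n)" by (metis sigma_append sigma_fac1)
  moreover have "fac 1 (S (x+n)) = fac 1 (S x) @ fac (S x + 1) (S (x+n) - S x)"
    using fac_add[of 1 "S x" "S (x+n) - S x"] by (simp add: add.commute)
  ultimately show ?thesis by simp
qed

lemma S_add_len: "S (x+n) = S x + length (sigma (fac (x+1) n))"
  using sigma_fac[of x n] by simp

lemma S_fac_eq: assumes "fac (x+1) n = fac (y+1) n"
  shows "S (x+n) - S x = S (y+n) - S y"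
  using S_add_len[of x n] S_add_len[of y n] assms by simp

lemma S_trib: "S (trib i) = trib (Suc i)"
proof -
  have "fac 1 (trib i) = P i" using fac_P[of "trib i" i] by (simp add: trib_P)
  thus ?thesis by (simp add: S_def trib_P P_Suc)
qed

lemma Spow_trib: "(S ^^ j) (trib i) = trib (i + j)"
  by (induction j) (auto simp: S_trib)

lemma sigma_pow_fac1: "(sigma ^^ j) (fac 1 n) = fac 1 ((S ^^ j) n)"
  by (induction j) (simp_all add: sigma_fac1[simplified])

lemma sigma_pow_fac: "(sigma ^^ j) (fac (x+1) n) = fac ((S ^^ j) x + 1) ((S ^^ j) (x+n) - (S ^^ j) x)"
proof (induction j)
  case (Suc j)
  have m: "(S ^^ j) x \<le> (S ^^ j) (x+n)"
  proof (induction j)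
    case (Suc j) thus ?case by simp
  qed simp
  have "(sigma ^^ Suc j) (fac (x+1) n) = sigma (fac ((S ^^ j) x + 1) ((S ^^ j) (x+n) - (S ^^ j) x))"
    using Suc by simp
  also have "\<dots> = fac (S ((S ^^ j) x) + 1) (S ((S ^^ j) x + ((S ^^ j) (x+n) - (S ^^ j) x)) - S ((S ^^ j) x))"
    by (rule sigma_fac)
  finally show ?case using m by simp
qed simp




lemma fac_take: "m \<le> n \<Longrightarrow> fac i m = take m (fac i n)"
  by (rule nth_equalityI) (auto simp: fac_nth)

lemma fac_eq_tw: "fac i n = fac i' n \<Longrightarrow> k < n \<Longrightarrow> tw (i + k) = tw (i' + k)"
  by (metis fac_nth)

lemma fac_eqI: "(\<And>k. k < n \<Longrightarrow> tw (i + k) = tw (i' + k)) \<Longrightarrow> fac i n = fac i' n"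
  by (rule nth_equalityI) (auto simp: fac_nth)

lemma fac1_P: "fac 1 (trib j) = P j" using fac_P[of "trib j" j] by (simp add: trib_P)

lemma sigpow_LB: "j \<ge> 1 \<Longrightarrow> \<exists>z. (sigma ^^ j) [LB] = P (j - 1) @ z"
proof -
  assume "j \<ge> 1"
  then obtain i where i: "j = Suc i" by (cases j) auto
  have "(sigma ^^ j) [LB] = (sigma ^^ i) [LA, LC]" by (simp add: i funpow_Suc_right del: funpow.simps)
  also have "\<dots> = P i @ (sigma ^^ i) [LC]" using sigma_pow_append[of i "[LA]" "[LC]"] by (simp add: P_def)
  finally show ?thesis using i by auto
qed

lemma P_Suc_split: "P (Suc j) = P j @ (sigma ^^ j) [LB]"
  using sigma_pow_append[of j "[LA]" "[LB]"] by (simp add: P_def funpow_Suc_right del: funpow.simps)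

lemma shift1: assumes "j \<ge> 1" "n \<le> trib (j - 1)" shows "fac (trib j + 1) n = fac 1 n"
proof (rule fac_eqI)
  fix k assume k: "k < n"
  obtain z where z: "(sigma ^^ j) [LB] = P (j - 1) @ z" using sigpow_LB assms by blast
  have e: "P (Suc j) = P j @ P (j-1) @ z" using P_Suc_split z by simp
  have "tw (trib j + 1 + k) = P (Suc j) ! (trib j + k)"
    using tw_P[of "trib j + 1 + k" "Suc j"] assms k e by (simp add: trib_P)
  also have "\<dots> = P (j-1) ! k" using e k assms by (simp add: nth_append trib_P)
  also have "\<dots> = tw (1 + k)" using tw_P[of "1 + k" "j-1"] k assms by simp
  finally show "tw (trib j + 1 + k) = tw (1 + k)" .
qed

lemma S_shift1: assumes "j \<ge> 1" "n \<le> trib (j - 1)" shows "S (trib j + n) = trib (Suc j) + S n"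
proof -
  have "S (trib j + n) - S (trib j) = S (0 + n) - S 0"
    by (rule S_fac_eq) (use shift1[OF assms] in simp)
  moreover have "S (trib j) \<le> S (trib j + n)" by simp
  ultimately show ?thesis using S_trib[of j] by simp
qed

lemma pfx3': "fac (S (S (S x)) + 1) 7 = [LA,LB,LA,LC,LA,LB,LA]"
proof -
  have a1: "tw (S x + 1) = LA" by (rule tw_block_start)
  define y where "y = tw (S x + 2)"
  have "fac (S x + 1) 2 = [LA, y]" using a1 by (simp add: y_def numeral_eq_Suc fac_Suc)
  hence "sigma (fac (S x + 1) 2) = [LA, LB] @ sig y" by simp
  hence f2: "fac (S (S x) + 1) (S (S x + 2) - S (S x)) = [LA, LB] @ sig y"
    using sigma_fac[of "S x" 2] by simp
  have l2: "S (S x + 2) - S (S x) \<ge> 3"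
    using S_add_len[of "S x" 2] \<open>sigma (fac (S x + 1) 2) = [LA, LB] @ sig y\<close> by (cases y) auto
  have "fac (S (S x) + 1) 3 = [LA, LB, LA]"
    using fac_take[OF l2, of "S (S x) + 1"] f2 by (cases y) (auto simp: numeral_eq_Suc)
  hence "sigma (fac (S (S x) + 1) 3) = [LA,LB,LA,LC,LA,LB]" by simp
  hence f3: "fac (S (S (S x)) + 1) (S (S (S x) + 3) - S (S (S x))) = [LA,LB,LA,LC,LA,LB]"
    using sigma_fac[of "S (S x)" 3] by simp
  hence l3: "S (S (S x) + 3) = S (S (S x)) + 6"
    using S_add_len[of "S (S x)" 3] \<open>sigma (fac (S (S x) + 1) 3) = _\<close> by simp
  have "fac (S (S (S x)) + 1) 7 = fac (S (S (S x)) + 1) 6 @ [tw (S (S (S x)) + 1 + 6)]"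
    by (simp add: fac_Suc numeral_eq_Suc)
  also have "tw (S (S (S x)) + 1 + 6) = LA" using tw_block_start[of "S (S x) + 3"] l3 by simp
  finally show ?thesis using f3 l3 by simp
qed

lemma pfx3: "fac ((S ^^ 3) x + 1) 7 = P 3"
proof -
  have e: "(S ^^ 3) x = S (S (S x))" by (simp add: numeral_3_eq_3)
  show ?thesis unfolding e P_3 by (rule pfx3')
qed

lemma pfx: assumes "j \<ge> 3" shows "fac ((S ^^ j) x + 1) (trib j) = P j"
  using assms
proof (induction j rule: dec_induct)
  case base have "trib 3 = 7" by (simp add: trib_P P_3)
    thus ?case using pfx3 by simp
next
  case (step j)
  let ?y = "(S ^^ j) x"
  have "sigma (fac (?y + 1) (trib j)) = fac (S ?y + 1) (S (?y + trib j) - S ?y)" by (rule sigma_fac)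
  hence e: "fac (S ?y + 1) (S (?y + trib j) - S ?y) = P (Suc j)" using step by (simp add: P_Suc)
  hence "S (?y + trib j) - S ?y = trib (Suc j)" by (metis fac_length trib_P)
  thus ?case using e by simp
qed

lemma pfx_tw: assumes "j \<ge> 3" "1 \<le> i" "i \<le> trib j" shows "tw ((S ^^ j) x + i) = tw i"
proof -
  have "fac ((S ^^ j) x + 1) (trib j) = fac 1 (trib j)" using pfx[OF assms(1)] fac1_P by simp
  from fac_eq_tw[OF this, of "i - 1"] assms show ?thesis by simp
qed

lemma S_add_pfx: assumes "j \<ge> 3" "y \<le> trib j" shows "S ((S ^^ j) x + y) = (S ^^ Suc j) x + S y"
proof -
  have "fac ((S ^^ j) x + 1) y = fac 1 y"
    using pfx[OF assms(1)] fac1_P fac_take[OF assms(2)] by metis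
  hence "S ((S ^^ j) x + y) - S ((S ^^ j) x) = S (0 + y) - S 0"
    by (intro S_fac_eq) simp
  moreover have "S ((S ^^ j) x) \<le> S ((S ^^ j) x + y)" by simp
  ultimately show ?thesis by (simp only: funpow.simps o_apply add_0 S_0 diff_zero)
qed

lemma sigpow_len_ge: "j \<ge> 1 \<Longrightarrow> length ((sigma ^^ j) [l]) \<ge> trib (j - 1)"
proof -
  assume "j \<ge> 1"
  then obtain i where i: "j = Suc i" by (cases j) auto
  show ?thesis
  proof (cases l)
    case LA thus ?thesis using trib_mono[of i j] i by (simp add: trib_P P_def del: funpow.simps)
  next
    case LB
    have "(sigma ^^ j) [LB] = (sigma ^^ i) [LA, LC]" by (simp add: i LB funpow_Suc_right del: funpow.simps)
    also have "\<dots> = P i @ (sigma ^^ i) [LC]" using sigma_pow_append[of i "[LA]" "[LC]"] by (simp add: P_def)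
    finally show ?thesis using i LB by (simp add: trib_P del: funpow.simps)
  next
    case LC
    have "(sigma ^^ j) [LC] = (sigma ^^ i) [LA]" by (simp add: i LC funpow_Suc_right del: funpow.simps)
    thus ?thesis using i LC by (simp add: trib_P P_def del: funpow.simps)
  qed
qed

lemma Spow_mono: "m \<le> n \<Longrightarrow> (S ^^ j) m \<le> (S ^^ j) n"
  by (induction j) auto

lemma Spow_step: assumes "j \<ge> 1" shows "(S ^^ j) (Suc y) \<ge> (S ^^ j) y + trib (j - 1)"
proof -
  have "(sigma ^^ j) (fac (y+1) 1) = fac ((S ^^ j) y + 1) ((S ^^ j) (y+1) - (S ^^ j) y)"
    by (rule sigma_pow_fac)
  hence "length ((sigma ^^ j) (fac (y+1) 1)) = (S ^^ j) (y+1) - (S ^^ j) y"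
    by (simp only: fac_length)
  moreover have "fac (y+1) 1 = [tw (y+1)]" by (simp add: fac_def)
  ultimately have "length ((sigma ^^ j) [tw (y+1)]) = (S ^^ j) (y+1) - (S ^^ j) y" by simp
  thus ?thesis using sigpow_len_ge[OF assms, of "tw (y+1)"] Spow_mono[of y "Suc y" j] by simp
qed

lemma Spow_0[simp]: "(S ^^ j) 0 = 0" by (induction j) auto




lemma trib_rec': "trib (Suc (Suc i)) = trib (Suc i) + trib i + trib (i - 1)"
proof (cases i)
  case 0 thus ?thesis by simp
next
  case (Suc k) thus ?thesis using trib_rec[of k] by (simp add: numeral_3_eq_3)
qed

lemma trib_3: "trib 3 = 7" using trib_rec_at[of 3 0 2 1] by simp
lemma trib_4: "trib 4 = 13"
proof -
  have "trib 4 = trib 3 + trib 2 + trib 1" by (rule trib_rec_at) simp_all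
  thus ?thesis by (simp add: trib_3)
qed
lemma trib_5: "trib 5 = 24"
proof -
  have "trib 5 = trib 4 + trib 3 + trib 2" by (rule trib_rec_at) simp_all
  thus ?thesis by (simp add: trib_3 trib_4)
qed
lemma trib_6: "trib 6 = 44"
proof -
  have "trib 6 = trib 5 + trib 4 + trib 3" by (rule trib_rec_at) simp_all
  thus ?thesis by (simp add: trib_3 trib_4 trib_5)
qed
lemma trib_7: "trib 7 = 81"
proof -
  have "trib 7 = trib 6 + trib 5 + trib 4" by (rule trib_rec_at) simp_all
  thus ?thesis by (simp add: trib_4 trib_5 trib_6)
qed
lemma trib_8: "trib 8 = 149"
proof -
  have "trib 8 = trib 7 + trib 6 + trib 5" by (rule trib_rec_at) simp_all
  thus ?thesis by (simp add: trib_5 trib_6 trib_7)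
qed
lemma trib_9: "trib 9 = 274"
proof -
  have "trib 9 = trib 8 + trib 7 + trib 6" by (rule trib_rec_at) simp_all
  thus ?thesis by (simp add: trib_6 trib_7 trib_8)
qed
lemma trib_10: "trib 10 = 504"
proof -
  have "trib 10 = trib 9 + trib 8 + trib 7" by (rule trib_rec_at) simp_all
  thus ?thesis by (simp add: trib_7 trib_8 trib_9)
qed

lemma par_key: fixes X Y Z i :: nat
  assumes "even X \<longleftrightarrow> ((i+2) mod 4 = 1 \<or> (i+2) mod 4 = 2)"
   "even Y \<longleftrightarrow> ((i+1) mod 4 = 1 \<or> (i+1) mod 4 = 2)"
   "even Z \<longleftrightarrow> (i mod 4 = 1 \<or> i mod 4 = 2)"
  shows "even (X+Y+Z) \<longleftrightarrow> ((i+3) mod 4 = 1 \<or> (i+3) mod 4 = 2)"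
proof -
  obtain q r where qr: "i = 4*q + r" "r < 4" by (metis mod_div_mult_eq mod_less_divisor zero_less_numeral add.commute mult.commute)
  have m: "\<And>k. (i + k) mod 4 = (r + k) mod 4" using qr(1) by (simp add: add.assoc)
  have m0: "i mod 4 = r" using qr by simp
  have "r = 0 \<or> r = 1 \<or> r = 2 \<or> r = 3" using qr(2) by auto
  thus ?thesis using assms unfolding m m0 by (elim disjE; simp)
qed

lemma par_key2: fixes X Z i :: nat
  assumes "even X \<longleftrightarrow> ((i+2) mod 4 = 1 \<or> (i+2) mod 4 = 2)"
   "even Z \<longleftrightarrow> (i mod 4 = 1 \<or> i mod 4 = 2)"
  shows "odd (X + Z)"
proof -
  obtain q r where qr: "i = 4*q + r" "r < 4" by (metis mod_div_mult_eq mod_less_divisor zero_less_numeral add.commute mult.commute)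
  have m: "\<And>k. (i + k) mod 4 = (r + k) mod 4" using qr(1) by (simp add: add.assoc)
  have m0: "i mod 4 = r" using qr by simp
  have "r = 0 \<or> r = 1 \<or> r = 2 \<or> r = 3" using qr(2) by auto
  thus ?thesis using assms unfolding m m0 by (elim disjE; simp)
qed

lemma trib_par: "even (trib j) \<longleftrightarrow> (j mod 4 = 1 \<or> j mod 4 = 2)"
proof (induction j rule: less_induct)
  case (less j)
  show ?case
  proof (cases "j < 3")
    case True
    hence "j = 0 \<or> j = 1 \<or> j = 2" by auto
    thus ?thesis by auto
  next
    case False
    then obtain i where i: "j = i + 3" by (metis add.commute le_Suc_ex not_less)
    have r: "trib j = trib (i+2) + trib (i+1) + trib i" by (rule trib_rec_at) (simp_all add: i)
    have h2: "even (trib (i+2)) \<longleftrightarrow> ((i+2) mod 4 = 1 \<or> (i+2) mod 4 = 2)" using less i by simp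
    have h1: "even (trib (i+1)) \<longleftrightarrow> ((i+1) mod 4 = 1 \<or> (i+1) mod 4 = 2)" using less i by simp
    have h0: "even (trib i) \<longleftrightarrow> (i mod 4 = 1 \<or> i mod 4 = 2)" using less i by simp
    show ?thesis unfolding r using par_key[OF h2 h1 h0] i by simp
  qed
qed

lemma trib_odd_pair: "odd (trib (Suc (Suc i)) + trib i)"
proof -
  have a: "even (trib (i+2)) \<longleftrightarrow> ((i+2) mod 4 = 1 \<or> (i+2) mod 4 = 2)" by (rule trib_par)
  have b: "even (trib i) \<longleftrightarrow> (i mod 4 = 1 \<or> i mod 4 = 2)" by (rule trib_par)
  show ?thesis using par_key2[OF a b] by simp
qed

definition hh :: "nat \<Rightarrow> nat" where "hh j = (trib (Suc j) + trib (j - 1) - 3) div 2"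

lemma hh2: "2 * hh j + 3 = trib (Suc j) + trib (j - 1)"
proof -
  have odd: "odd (trib (Suc j) + trib (j - 1))"
  proof (cases j)
    case 0 thus ?thesis by simp
  next
    case (Suc i)
    thus ?thesis using trib_odd_pair[of i] by simp
  qed
  have "trib (Suc j) \<ge> 2" using trib_mono[of 1 "Suc j"] by simp
  moreover have "trib (j - 1) \<ge> 1" by (rule trib_pos)
  ultimately show ?thesis using odd unfolding hh_def by presburger
qed

lemma hh_0: "hh 0 = 0" and hh_1: "hh 1 = 1" and hh_2: "hh 2 = 3" and hh_3: "hh 3 = 7"
  using hh2[of 0] hh2[of 1] hh2[of 2] hh2[of 3] by (simp_all add: trib_3 trib_4)

lemma hh_rec: assumes "j \<ge> 3" shows "hh j = trib j + hh (j - 3)"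
proof -
  obtain i where i: "j = i + 3" using assms by (metis add.commute le_Suc_ex)
  have ee: "Suc j = i + 4" "j - 1 = i + 2" "j - 3 = i" "Suc i = i + 1" using i by simp_all
  have a: "2 * hh j + 3 = trib (i+4) + trib (i+2)" using hh2[of j] by (simp only: ee)
  have b: "2 * hh (j-3) + 3 = trib (i+1) + trib (i - 1)" using hh2[of i] by (simp only: ee)
  have c: "trib (i+4) = trib (i+3) + trib (i+2) + trib (i+1)" by (rule trib_rec_at) simp_all
  have d: "trib (i+2) = trib (i+1) + trib i + trib (i - 1)" using trib_rec'[of i]
    by (simp only: Suc_eq_plus1 add.assoc one_add_one)
  have e: "trib (i+3) = trib (i+2) + trib (i+1) + trib i" by (rule trib_rec_at) simp_all
  have f: "trib j = trib (i+3)" using i by simp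
  show ?thesis using a b c d e f by linarith
qed

lemma hh_le_trib: "hh j \<le> trib (Suc (Suc j))"
  using hh2[of j] trib_mono[of "j-1" "Suc j"] trib_mono[of "Suc j" "Suc (Suc j)"] by linarith

lemma hh_mono_Suc: "hh j \<le> hh (Suc j)"
proof -
  have "trib (Suc j) \<le> trib (Suc (Suc j))" "trib (j - 1) \<le> trib j" by (auto intro: trib_mono)
  thus ?thesis using hh2[of j] hh2[of "Suc j"] by simp
qed

lemma hh_mono: "i \<le> j \<Longrightarrow> hh i \<le> hh j"
  by (induction j rule: dec_induct) (auto intro: order_trans[OF _ hh_mono_Suc])

lemma S_1: "S 1 = 2" using S_trib[of 0] by simp
lemma S_3: "S 3 = 6"
proof -
  have "tw 3 = LA" using tw_P[of 3 2] by (simp add: P_2)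
  moreover have "S 2 = 4" using S_trib[of 1] by simp
  ultimately show ?thesis using S_Suc[of 2] by (simp add: numeral_3_eq_3)
qed

lemma S_hh: "S (hh j) + 1 = hh (Suc j)"
proof (induction j rule: less_induct)
  case (less j)
  show ?case
  proof (cases "j < 3")
    case True
    thus ?thesis using hh_0 hh_1 hh_2 hh_3 S_1 S_3 by (auto simp: less_Suc_eq numeral_eq_Suc)
  next
    case False
    hence j3: "j \<ge> 3" by simp
    have h1: "hh j = trib j + hh (j - 3)" using hh_rec[OF j3] .
    have "Suc j - 3 = j - 2" using j3 by simp
    hence h2: "hh (Suc j) = trib (Suc j) + hh (j - 2)" using hh_rec[of "Suc j"] j3 by simp
    have le: "hh (j - 3) \<le> trib (j - 1)" using hh_le_trib[of "j-3"] j3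
      by (metis Suc_diff_Suc Suc_lessD diff_Suc_Suc numeral_3_eq_3 numeral_2_eq_2 One_nat_def diff_diff_left le_refl less_Suc_eq_le not_le Nat.add_diff_assoc2 False trans_less_add2 plus_1_eq_Suc)
    have "S (hh j) = trib (Suc j) + S (hh (j - 3))" using S_shift1[of j "hh (j-3)"] h1 le j3 by simp
    moreover have "S (hh (j - 3)) + 1 = hh (Suc (j - 3))" using less[of "j-3"] j3 by simp
    moreover have "Suc (j - 3) = j - 2" using j3 by simp
    ultimately show ?thesis using h2 by simp
  qed
qed

lemma shift_trans: "fac (trib j + 1) (hh j) = fac 1 (hh j)"
proof (induction j)
  case 0 thus ?case by (simp add: hh_0)
next
  case (Suc j)
  have "S (trib j + hh j) - S (trib j) = S (0 + hh j) - S 0"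
    by (rule S_fac_eq) (use Suc in simp)
  moreover have "S (trib j) \<le> S (trib j + hh j)" by simp
  ultimately have e1: "S (trib j + hh j) = trib (Suc j) + S (hh j)" using S_trib[of j] by simp
  have "sigma (fac (trib j + 1) (hh j)) = sigma (fac (0 + 1) (hh j))" using Suc by simp
  hence e2: "fac (trib (Suc j) + 1) (S (hh j)) = fac 1 (S (hh j))"
    unfolding sigma_fac using e1 S_trib[of j] by simp
  have e3: "tw (trib (Suc j) + 1 + S (hh j)) = tw (1 + S (hh j))"
    using tw_block_start[of "trib j + hh j"] tw_block_start[of "hh j"] e1 by (simp add: add.commute add.left_commute)
  have "hh (Suc j) = Suc (S (hh j))" using S_hh[of j] by simp
  thus ?case using e2 e3 by (simp add: fac_Suc)
qed

lemma trans_tw: "1 \<le> x \<Longrightarrow> x \<le> hh j \<Longrightarrow> tw (trib j + x) = tw x"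
  using fac_eq_tw[OF shift_trans[of j], of "x - 1"] by simp




definition per :: "nat \<Rightarrow> nat \<Rightarrow> nat \<Rightarrow> bool" where
  "per L i j \<longleftrightarrow> (\<forall>y. i \<le> y \<longrightarrow> y + L \<le> j \<longrightarrow> tw y = tw (y + L))"

definition mrun :: "nat \<Rightarrow> nat \<Rightarrow> nat \<Rightarrow> bool" where
  "mrun L s e \<longleftrightarrow> 1 \<le> L \<and> 1 \<le> s \<and> s + L \<le> e \<and> per L s e \<and>
     (s = 1 \<or> tw (s - 1) \<noteq> tw (s - 1 + L)) \<and> tw (e + 1) \<noteq> tw (e + 1 - L)"

lemma S_add_ge: "S q + n \<le> S (q + n)"
proof (induction n)
  case (Suc n) thus ?case using S_mono_Suc[of "q+n"] by (simp del: S_less_iff)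
qed simp

lemma S_two: "S q + 3 \<le> S (q + 2)"
proof -
  have "S (Suc (Suc q)) = S q + length (sig (tw (Suc q))) + length (sig (tw (Suc (Suc q))))"
    by (simp add: S_Suc)
  moreover have "\<not> (tw (Suc q) = LC \<and> tw (Suc (Suc q)) = LC)" using no_cc by blast
  ultimately show ?thesis by (auto simp: len_sig)
qed

lemma S_add_ge2: "n \<ge> 2 \<Longrightarrow> S q + n + 1 \<le> S (q + n)"
proof -
  assume "n \<ge> 2"
  then obtain m where m: "n = 2 + m" by (metis le_Suc_ex)
  have "S q + 3 \<le> S (q + 2)" by (rule S_two)
  moreover have "S (q + 2) + m \<le> S (q + 2 + m)" by (rule S_add_ge)
  ultimately show ?thesis using m by (simp add: add.assoc)
qed

lemma tw_block_last: "tw (S (Suc q)) = last (sig (tw (Suc q)))"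
proof -
  have l: "length (sig (tw (Suc q))) - 1 < length (sig (tw (Suc q)))" by (simp add: len_sig)
  have "S (Suc q) = S q + 1 + (length (sig (tw (Suc q))) - 1)" by (simp add: S_Suc len_sig)
  moreover have "sig (tw (Suc q)) ! (length (sig (tw (Suc q))) - 1) = last (sig (tw (Suc q)))"
    by (cases "tw (Suc q)") auto
  ultimately show ?thesis using tw_block[OF l] by simp
qed

lemma sig_last_inj: "last (sig a) = last (sig b) \<Longrightarrow> a = b"
  by (cases a; cases b) auto

lemma exists_A_after: "1 \<le> p \<Longrightarrow> \<exists>p'. p \<le> p' \<and> p' \<le> p + 1 \<and> tw p' = LA"
proof (cases "tw p = LA")
  case False
  assume "1 \<le> p"
  thus ?thesis using tw_notA_next[OF False] by (intro exI[of _ "p+1"]) simp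
qed auto

lemma block_shift:
  assumes P: "\<And>y. s \<le> y \<Longrightarrow> y + L \<le> e \<Longrightarrow> tw y = tw (y + L)"
    and s: "s = S qa + 1" and L': "S (qa + L') = S qa + L"
    and q: "qa \<le> q" "S (q + L') + 1 \<le> e"
  shows "S (q + L') = S q + L"
  using q
proof (induction q rule: dec_induct)
  case base show ?case using L' .
next
  case (step q)
  have lt: "S (q + L') < S (Suc q + L')" by simp
  hence IH: "S (q + L') = S q + L" using step.IH step.prems by linarith
  have sq: "S qa \<le> S q" using step.hyps by simp
  have A: "s \<le> S q + 2" using sq s by linarith
  have B: "S q + 2 + L \<le> e" using lt IH step.prems by linarith
  have "tw (S q + 2) = tw (S q + 2 + L)" by (rule P[OF A B])
  also have "S q + 2 + L = S (q + L') + 2" using IH by simp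
  finally have "tw (Suc q) = tw (Suc (q + L'))" using tw_block_letter[of q] tw_block_letter[of "q+L'"] by simp
  thus ?case using IH by (simp add: S_Suc)
qed

lemma not_evper: assumes "1 \<le> L" shows "\<not> (\<forall>y\<ge>s. tw y = tw (y + L))"
  using assms
proof (induction L arbitrary: s rule: less_induct)
  case (less L)
  show ?case
  proof
    assume H: "\<forall>y\<ge>s. tw y = tw (y + L)"
    obtain p where p: "max s 1 \<le> p" "tw p = LA" using exists_A_after[of "max s 1"] by auto
    have p1: "1 \<le> p" "s \<le> p" using p by auto
    show False
    proof (cases "L = 1")
      case True
      have h1: "tw p = tw (p+1)" using H[rule_format, of p] p1 True by simp
      have h2: "tw (p+1) = tw (p+1+1)" using H[rule_format, of "p+1"] p1 True by simp
      hence "tw (p+1) = LA" "tw (p+2) = LA" using h1 h2 p by (simp_all add: numeral_2_eq_2)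
      thus False using no_aaa p p1 by blast
    next
      case False
      hence L2: "L \<ge> 2" using less by simp
      obtain q0 where q0: "p = S q0 + 1" using tw_A_block p p1 by blast
      have "tw (p + L) = LA" using H[rule_format, of p] p p1 by simp
      moreover have "1 \<le> p + L" using p1 by simp
      ultimately obtain q1 where q1: "p + L = S q1 + 1" using tw_A_block by blast
      have "S q0 < S q1" using q0 q1 less.prems by linarith
      hence lt: "q0 < q1" by simp
      define L' where "L' = q1 - q0"
      have L'e: "S (q0 + L') = S q0 + L" using q0 q1 lt L'_def by simp
      have inv: "\<And>q. q0 \<le> q \<Longrightarrow> S (q + L') = S q + L"
      proof -
        fix q assume qq: "q0 \<le> q"
        have P: "\<And>y. p \<le> y \<Longrightarrow> y + L \<le> S (q + L') + 1 \<Longrightarrow> tw y = tw (y + L)"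
          using H p1 by (metis le_trans)
        show "S (q + L') = S q + L"
          by (rule block_shift[where s=p and L=L and e="S (q + L') + 1" and qa=q0 and L'=L' and q=q, OF P q0 L'e qq order.refl])
      qed
      have perq: "\<forall>y\<ge>q0 + 1. tw y = tw (y + L')"
      proof (intro allI impI)
        fix y assume y: "q0 + 1 \<le> y"
        define q where "q = y - 1"
        have qy: "y = Suc q" "q0 \<le> q" using y q_def by simp_all
        have "S q0 \<le> S q" using qy by simp
        hence "s \<le> S q + 2" using p1 q0 by linarith
        hence "tw (S q + 2) = tw (S q + 2 + L)" using H[rule_format, of "S q + 2"] by simp
        also have "S q + 2 + L = S (q + L') + 2" using inv[OF qy(2)] by simp
        finally show "tw y = tw (y + L')" using tw_block_letter[of q] tw_block_letter[of "q+L'"] qy by simp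
      qed
      have L'pos: "1 \<le> L'" using lt L'_def by simp
      have "L' < L"
      proof (cases "L' \<ge> 2")
        case True thus ?thesis using S_add_ge2[OF True, of q0] L'e by simp
      next
        case False thus ?thesis using L2 by simp
      qed
      thus False using less.IH[OF _ L'pos, of "q0+1"] perq by blast
    qed
  qed
qed

lemma desub:
  assumes mr: "mrun L s e" and L2: "L \<ge> 2" and len: "s + 3*L \<le> e + 2"
  shows "\<exists>q0 r L'. mrun L' (q0+1) r \<and> s = S q0 + 1 \<and> e = S r + 1 \<and> S (q0 + L') = S q0 + L
           \<and> L' < L \<and> q0 + 1 + 3*L' \<le> r + 2"
proof -
  have s1: "1 \<le> s" and sLe: "s + L \<le> e" and left: "s = 1 \<or> tw (s - 1) \<noteq> tw (s - 1 + L)"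
    and right: "tw (e + 1) \<noteq> tw (e + 1 - L)" using mr by (auto simp: mrun_def)
  have P: "\<And>y. s \<le> y \<Longrightarrow> y + L \<le> e \<Longrightarrow> tw y = tw (y + L)" using mr by (auto simp: mrun_def per_def)
  have sa: "tw s = LA"
  proof (rule ccontr)
    assume h: "tw s \<noteq> LA"
    have a1: "2 \<le> s" "tw (s - 1) = LA" using tw_notA_prev[OF h s1] by auto
    have "tw (s + L) = tw s" using P[of s] sLe by simp
    hence "tw (s + L) \<noteq> LA" using h by simp
    hence "tw (s + L - 1) = LA" using tw_notA_prev[of "s+L"] s1 by simp
    moreover have "s + L - 1 = s - 1 + L" using a1 by simp
    ultimately show False using left a1 by simp
  qed
  obtain q0 where q0: "s = S q0 + 1" using tw_A_block[OF sa s1] by blast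
  have ea: "tw e = LA"
  proof (rule ccontr)
    assume h: "tw e \<noteq> LA"
    have e1: "1 \<le> e" using sLe s1 by simp
    have "tw (e+1) = LA" using tw_notA_next[OF h e1] .
    have "tw (e - L) = tw (e - L + L)" using P[of "e - L"] len L2 by simp
    hence "tw (e - L) \<noteq> LA" using h len L2 by simp
    hence "tw (e - L + 1) = LA" using tw_notA_next[of "e - L"] len L2 by simp
    moreover have "e - L + 1 = e + 1 - L" using len L2 by simp
    ultimately show False using right \<open>tw (e+1) = LA\<close> by simp
  qed
  have e1: "1 \<le> e" using sLe s1 by simp
  obtain r where r: "e = S r + 1" using tw_A_block[OF ea e1] by blast
  have "tw (s + L) = LA" using P[of s] sLe sa by simp
  moreover have "1 \<le> s + L" using s1 by simp
  ultimately obtain q1 where q1: "s + L = S q1 + 1" using tw_A_block by blast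
  have "S q0 < S q1" using q0 q1 L2 by linarith
  hence lt: "q0 < q1" by simp
  define L' where "L' = q1 - q0"
  have L'e: "S (q0 + L') = S q0 + L" using q0 q1 lt L'_def by simp
  have L'pos: "1 \<le> L'" using lt L'_def by simp
  have Sr: "S q0 + 3 * L \<le> S r + 2" using len q0 r by simp
  have rgt: "q0 + L' < r"
  proof -
    have "S (q0 + L') < S r" using L'e Sr L2 by linarith
    thus ?thesis by simp
  qed
  have inv: "\<And>q. q0 \<le> q \<Longrightarrow> q + L' \<le> r \<Longrightarrow> S (q + L') = S q + L"
  proof -
    fix q assume qq: "q0 \<le> q" "q + L' \<le> r"
    have ee: "S (q + L') + 1 \<le> e" using qq(2) r by simp
    show "S (q + L') = S q + L"
      apply (rule block_shift[where s=s and L=L and e=e and qa=q0 and L'=L' and q=q])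
      apply (rule P, assumption, assumption)
      apply (rule q0)
      apply (rule L'e)
      apply (rule qq(1))
      apply (rule ee)
      done
  qed
  have letters: "\<And>q. q0 \<le> q \<Longrightarrow> Suc q + L' \<le> r \<Longrightarrow> tw (Suc q) = tw (Suc q + L')"
  proof -
    fix q assume qq: "q0 \<le> q" "Suc q + L' \<le> r"
    have iq: "S (q + L') = S q + L" using inv[OF qq(1)] qq(2) by simp
    have "S q0 \<le> S q" using qq by simp
    hence a: "s \<le> S q + 2" using q0 by linarith
    have "S (q + L') < S (Suc q + L')" by simp
    moreover have "S (Suc q + L') \<le> S r" using qq(2) by simp
    ultimately have b: "S q + 2 + L \<le> e" using iq r by linarith
    have "tw (S q + 2) = tw (S q + 2 + L)" by (rule P[OF a b])
    also have "S q + 2 + L = S (q + L') + 2" using iq by simp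
    finally show "tw (Suc q) = tw (Suc q + L')" using tw_block_letter[of q] tw_block_letter[of "q+L'"] by simp
  qed
  have perq: "per L' (q0+1) r"
    unfolding per_def
  proof (intro allI impI)
    fix y assume y: "q0 + 1 \<le> y" "y + L' \<le> r"
    define q where "q = y - 1"
    have qy: "y = Suc q" "q0 \<le> q" using y q_def by simp_all
    show "tw y = tw (y + L')" using letters[OF qy(2)] y qy by simp
  qed
  have leftq: "q0 + 1 = 1 \<or> tw (q0 + 1 - 1) \<noteq> tw (q0 + 1 - 1 + L')"
  proof (cases q0)
    case (Suc q')
    have "tw q0 \<noteq> tw (q0 + L')"
    proof
      assume eq: "tw q0 = tw (q0 + L')"
      have "tw (S q0) = last (sig (tw q0))" using tw_block_last[of q'] Suc by simp
      moreover have "tw (S (q0 + L')) = last (sig (tw (q0 + L')))" using tw_block_last[of "q'+L'"] Suc by simp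
      ultimately have "tw (s - 1) = tw (s - 1 + L)" using eq q0 L'e by simp
      moreover have "s \<noteq> 1" using q0 Suc S_ge[of q0] by simp
      ultimately show False using left by simp
    qed
    thus ?thesis by simp
  qed simp
  have rightq: "tw (r + 1) \<noteq> tw (r + 1 - L')"
  proof
    assume eq: "tw (r + 1) = tw (r + 1 - L')"
    define q where "q = r - L'"
    have qq: "q0 \<le> q" "q + L' = r" using rgt q_def by simp_all
    have iq: "S r = S q + L" using inv[OF qq(1)] qq(2) by simp
    have "r + 1 - L' = Suc q" using qq by simp
    hence "tw (Suc q) = tw (Suc r)" using eq by simp
    hence "tw (S q + 2) = tw (S r + 2)" using tw_block_second[of q] tw_block_second[of r] by simp
    moreover have "S r + 2 = e + 1" "S q + 2 = e + 1 - L" using r iq by simp_all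
    ultimately show False using right by simp
  qed
  have LL: "L' < L"
  proof (cases "L' \<ge> 2")
    case True thus ?thesis using S_add_ge2[OF True, of q0] L'e by simp
  next
    case False thus ?thesis using L2 by simp
  qed
  have lenq: "q0 + 1 + 3*L' \<le> r + 2"
  proof (rule ccontr)
    assume h: "\<not> ?thesis"
    show False
    proof (cases "r < q0 + 2 * L'")
      case True
      define q where "q = r - L'"
      have qq: "q0 \<le> q" "q + L' = r" "q < q0 + L'" using rgt q_def True by simp_all
      have iq: "S r = S q + L" using inv[OF qq(1)] qq(2) by simp
      have "S q < S (q0 + L')" using qq(3) by simp
      thus False using iq L'e Sr L2 by linarith
    next
      case False
      define q where "q = r - 2 * L'"
      have qq: "q0 \<le> q" "q + L' + L' = r" "q + 2 \<le> q0 + L'" "L' \<ge> 2" using False h q_def by simp_all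
      have i1: "S (q + L') = S q + L" using inv[OF qq(1)] qq(2) by simp
      have i2: "S (q + L' + L') = S (q + L') + L" using inv[of "q + L'"] qq by simp
      have "S (q + 2) \<le> S (q0 + L')" using qq(3) by simp
      moreover have "S q + 3 \<le> S (q + 2)" by (rule S_two)
      moreover have "S r = S (q + L' + L')" using qq(2) by simp
      ultimately show False using i1 i2 L'e Sr by linarith
    qed
  qed
  have "mrun L' (q0+1) r" unfolding mrun_def using L'pos perq leftq rightq rgt by simp
  thus ?thesis using q0 r L'e LL lenq by blast
qed




definition ff :: "nat \<Rightarrow> nat" where "ff k = trib (k+2) + trib (k+1) + 1"
definition ll :: "nat \<Rightarrow> nat" where "ll k = trib k + hh (Suc k)"

lemma hh_Suc0[simp]: "hh (Suc 0) = 1" using hh_1 by (simp only: One_nat_def)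

lemma S_shift1': "j \<ge> 1 \<Longrightarrow> n \<le> trib (j - 1) \<Longrightarrow> j' = Suc j \<Longrightarrow> S (trib j + n) = trib j' + S n"
  using S_shift1 by simp
lemma S_trib': "j' = Suc j \<Longrightarrow> S (trib j) = trib j'" using S_trib by simp

lemma ff_Suc: "ff (k+1) = trib (k+3) + trib (k+2) + 1"
proof -
  have e: "k + 1 + 2 = k + 3" "k + 1 + 1 = k + 2" by simp_all
  show ?thesis by (simp only: ff_def e)
qed
lemma ll_Suc: "ll (k+1) = trib (k+1) + hh (k+2)" unfolding ll_def by simp

lemma trib_k4: "trib (k+4) = trib (k+3) + trib (k+2) + trib (k+1)" by (rule trib_rec_at) simp_all
lemma trib_k3: "trib (k+3) = trib (k+2) + trib (k+1) + trib k" by (rule trib_rec_at) simp_all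

lemma hh_le_trib2: "hh (Suc k) \<le> trib (k+2)"
proof -
  have "2 * hh (Suc k) + 3 = trib (k+2) + trib k" using hh2[of "Suc k"] by simp
  moreover have "trib k \<le> trib (k+2)" by (rule trib_mono) simp
  ultimately show ?thesis by linarith
qed

lemma hh_pos: "hh (Suc k) \<ge> 1"
proof -
  have "trib (Suc (Suc k)) \<ge> trib 2" by (rule trib_mono) simp
  thus ?thesis using hh2[of "Suc k"] trib_pos[of k] by simp
qed

lemma arith_step:
  fixes k x :: nat
  defines "q0 \<equiv> (S ^^ (k+4)) x + trib (k+2) + trib (k+1)"
  shows "S q0 + 1 = (S ^^ (k+5)) x + ff (k+1)"
    and "S (q0 + trib k) = S q0 + trib (k+1)"
    and "S (q0 + ll k) + 1 = (S ^^ (k+5)) x + ff (k+1) + ll (k+1) - 1"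
proof -
  have j3: "k + 4 \<ge> 3" by simp
  have sk: "Suc (k+4) = k+5" by simp
  have t4: "trib (k+4) = trib (k+3) + trib (k+2) + trib (k+1)" by (rule trib_k4)
  have t3: "trib (k+3) = trib (k+2) + trib (k+1) + trib k" by (rule trib_k3)
  have t5: "trib (k+5) = trib (k+4) + trib (k+3) + trib (k+2)" by (rule trib_rec_at) simp_all
  have A: "S q0 = (S ^^ (k+5)) x + S (trib (k+2) + trib (k+1))"
    unfolding q0_def add.assoc using S_add_pfx[OF j3, of "trib (k+2) + trib (k+1)" x] t4 sk by simp
  have A2a: "S (trib (k+2) + trib (k+1)) = trib (k+3) + S (trib (k+1))"
    by (rule S_shift1') simp_all
  have A2b: "S (trib (k+1)) = trib (k+2)" by (rule S_trib') simp
  have A2: "S (trib (k+2) + trib (k+1)) = trib (k+3) + trib (k+2)" using A2a A2b by simp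
  show a: "S q0 + 1 = (S ^^ (k+5)) x + ff (k+1)" unfolding ff_Suc using A A2 by simp
  have B: "S (q0 + trib k) = (S ^^ (k+5)) x + S (trib (k+3))"
  proof -
    have "q0 + trib k = (S ^^ (k+4)) x + trib (k+3)" using t3 by (simp add: q0_def)
    thus ?thesis using S_add_pfx[OF j3, of "trib (k+3)" x] t4 sk by simp
  qed
  have "S (trib (k+3)) = trib (k+4)" by (rule S_trib') simp
  thus "S (q0 + trib k) = S q0 + trib (k+1)" using A A2 B t4 by simp
  have hle: "hh (Suc k) \<le> trib (k+2)" by (rule hh_le_trib2)
  have C: "S (q0 + ll k) = (S ^^ (k+5)) x + S (trib (k+3) + hh (Suc k))"
  proof -
    have "q0 + ll k = (S ^^ (k+4)) x + (trib (k+3) + hh (Suc k))" using t3 by (simp add: q0_def ll_def)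
    moreover have "trib (k+3) + hh (Suc k) \<le> trib (k+4)" using t4 hle by simp
    ultimately show ?thesis using S_add_pfx[OF j3, of "trib (k+3) + hh (Suc k)" x] sk by simp
  qed
  have C2: "S (trib (k+3) + hh (Suc k)) = trib (k+4) + S (hh (Suc k))"
    by (rule S_shift1') (use hle in simp_all)
  have C3: "S (hh (Suc k)) + 1 = hh (k+2)" using S_hh[of "Suc k"] by simp
  have "hh (k+2) \<ge> 1" using hh_pos[of "Suc k"] by simp
  show "S (q0 + ll k) + 1 = (S ^^ (k+5)) x + ff (k+1) + ll (k+1) - 1"
    unfolding ff_Suc ll_Suc using C C2 C3 t4 by simp
qed

lemma S_S_Suc: "S (Suc (S y)) = S (S y) + 2"
  using S_Suc[of "S y"] tw_block_start[of y] by simp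

lemma class_base:
  assumes "mrun 1 s e"
  shows "\<exists>x. s = (S ^^ 4) x + 7 \<and> e = s + 1"
proof -
  have s1: "1 \<le> s" and se: "s + 1 \<le> e" and P: "per 1 s e" using assms by (auto simp: mrun_def)
  have eq: "tw s = tw (s+1)" using P se by (simp add: per_def)
  have sa: "tw s = LA" using eq tw_notA_next[OF _ s1] by metis
  have sa2: "tw (s+1) = LA" using eq sa by simp
  have e: "e = s + 1"
  proof (rule ccontr)
    assume "e \<noteq> s + 1"
    hence "s + 2 \<le> e" using se by simp
    hence "tw (s+1) = tw (s+1+1)" using P by (simp add: per_def)
    thus False using no_aaa[OF sa sa2 s1] sa2 by (simp add: numeral_2_eq_2)
  qed
  obtain q where q: "s = S q + 1" using tw_A_block[OF sa s1] by blast
  have "tw (S q + 2) = LA" using sa2 q by (simp add: numeral_2_eq_2)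
  hence cq: "tw (Suc q) = LC" using tw_block_letter[of q] by simp
  obtain r where r: "Suc q = S r + 2" "tw (Suc r) \<noteq> LC" using tw_notA[of "Suc q"] cq by auto
  have br: "tw (Suc r) = LB" using tw_block_second[of r] cq r(2) r(1)
    by (cases "tw (Suc r)") auto
  obtain u where u: "Suc r = S u + 2" "tw (Suc u) \<noteq> LC" using tw_notA[of "Suc r"] br by auto
  have au: "tw (Suc u) = LA" using tw_block_second[of u] br u
    by (cases "tw (Suc u)") auto
  obtain v where v: "Suc u = S v + 1" using tw_A_block[OF au] by auto
  have uv: "u = S v" using v by simp
  have rr: "r = S (S v) + 1" using u(1) uv by simp
  have qq: "q = S (S (S v)) + 3" using r(1) rr S_S_Suc[of "S v"] by simp
  have "S ((S ^^ 3) v + 3) = (S ^^ Suc 3) v + S 3"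
    by (rule S_add_pfx) (simp_all add: trib_3)
  hence "S q = (S ^^ 4) v + 6" using qq S_3 by (simp add: numeral_3_eq_3 numeral_eq_Suc)
  thus ?thesis using q e by auto
qed

lemma classify:
  assumes "mrun L s e" "s + 3*L \<le> e + 2"
  shows "\<exists>k x. L = trib k \<and> s = (S ^^ (k+4)) x + ff k \<and> e = s + ll k - 1"
  using assms
proof (induction L arbitrary: s e rule: less_induct)
  case (less L)
  have L1: "1 \<le> L" using less.prems by (simp add: mrun_def)
  show ?case
  proof (cases "L = 1")
    case True
    obtain x where x: "s = (S ^^ 4) x + 7" "e = s + 1" using class_base less.prems True by blast
    have "ff 0 = 7" "ll 0 = 2" by (simp_all add: ff_def ll_def hh_1)
    thus ?thesis using x True by (intro exI[of _ 0] exI[of _ x]) simp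
  next
    case False
    hence L2: "L \<ge> 2" using L1 by simp
    obtain q0 r L' where d: "mrun L' (q0+1) r" "s = S q0 + 1" "e = S r + 1" "S (q0 + L') = S q0 + L"
      "L' < L" "q0 + 1 + 3*L' \<le> r + 2" using desub[OF less.prems(1) L2 less.prems(2)] by blast
    obtain k x where kx: "L' = trib k" "q0 + 1 = (S ^^ (k+4)) x + ff k" "r = q0 + 1 + ll k - 1"
      using less.IH[OF d(5) d(1) d(6)] by blast
    have q0e: "q0 = (S ^^ (k+4)) x + trib (k+2) + trib (k+1)" using kx(2) by (simp add: ff_def)
    have re: "r = q0 + ll k" using kx(3) by (simp add: ll_def)
    note ar = arith_step[of k x, folded q0e]
    have "L = trib (k+1)" using d(4) ar(2) kx(1) by simp
    moreover have "s = (S ^^ (k+1+4)) x + ff (k+1)" using d(2) ar(1) by (simp only: add.assoc numeral_plus_one) simp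
    moreover have "e = s + ll (k+1) - 1" using d(3) d(2) ar(1) ar(3) re by simp
    ultimately show ?thesis by blast
  qed
qed

lemma fwd:
  assumes P: "per L' (q0+1) r" and le: "q0 + L' \<le> r"
  shows "per (S (q0 + L') - S q0) (S q0 + 1) (S r + 1)"
proof -
  define L where "L = S (q0 + L') - S q0"
  have Le: "S (q0 + L') = S q0 + L" unfolding L_def using S_add_ge[of q0 L'] by simp
  have inv: "\<And>q. q0 \<le> q \<Longrightarrow> q + L' \<le> r \<Longrightarrow> S (q + L') = S q + L"
  proof -
    fix q assume "q0 \<le> q" "q + L' \<le> r"
    thus "S (q + L') = S q + L"
    proof (induction q rule: dec_induct)
      case base show ?case by (rule Le)
    next
      case (step q)
      have IH: "S (q + L') = S q + L" using step.IH step.prems by simp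
      have "tw (Suc q) = tw (Suc q + L')" using P step.hyps step.prems by (simp add: per_def)
      thus ?case using IH by (simp add: S_Suc)
    qed
  qed
  show ?thesis unfolding L_def[symmetric] per_def
  proof (intro allI impI)
    fix y assume y: "S q0 + 1 \<le> y" "y + L \<le> S r + 1"
    obtain q where q: "S q < y" "y \<le> S (Suc q)" using block_exists[of y] y by auto
    have qq0: "q0 \<le> q"
    proof -
      have "S q0 < S (Suc q)" using q y by linarith
      thus ?thesis by simp
    qed
    define qm where "qm = r - L'"
    have iqm: "S r = S qm + L" using inv[of qm] le qm_def by simp
    have "S q < S qm + 1" using q y iqm by linarith
    hence "S q \<le> S qm" by linarith
    hence qle: "q \<le> qm" by simp
    show "tw y = tw (y + L)"
    proof (cases "q < qm")
      case True
      have lq: "tw (Suc q) = tw (Suc q + L')" using P qq0 True qm_def le by (simp add: per_def)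
      have iq: "S (q + L') = S q + L" using inv[OF qq0] True qm_def le by simp
      define off where "off = y - S q - 1"
      have off: "y = S q + 1 + off" "off < length (sig (tw (Suc q)))"
        using q off_def by (auto simp: S_Suc)
      have "tw y = sig (tw (Suc q)) ! off" using tw_block[OF off(2)] off(1) by simp
      moreover have "tw (y + L) = sig (tw (Suc (q + L'))) ! off"
        using tw_block[of off "q + L'"] off lq iq by (simp add: add.commute add.left_commute)
      ultimately show ?thesis using lq by simp
    next
      case False
      hence "q = qm" using qle by simp
      hence "S q = S qm" by simp
      hence "y = S q + 1" using q y iqm by linarith
      moreover have "y + L = S r + 1" using \<open>q = qm\<close> \<open>y = S q + 1\<close> iqm by simp
      ultimately show ?thesis using tw_block_start[of q] tw_block_start[of r] by simp
    qed
  qed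
qed

lemma exist_run: "per (trib k) (ff k) (ff k + ll k - 1)"
proof (induction k)
  case 0
  have "ff 0 = 7" "ll 0 = 2" by (simp_all add: ff_def ll_def hh_1)
  moreover have "tw 7 = LA" using tw_P[of 7 3] by (simp add: trib_3 P_3)
  moreover have "tw 8 = LA"
  proof -
    have "fac (trib 3 + 1) 1 = fac 1 1" by (rule shift1) simp_all
    hence "tw (trib 3 + 1) = tw 1" by (simp add: fac_def)
    thus ?thesis using tw_1 by (simp add: trib_3)
  qed
  ultimately show ?case by (auto simp: per_def)
next
  case (Suc k)
  define q0 where "q0 = trib (k+2) + trib (k+1)"
  have q0e: "q0 = (S ^^ (k+4)) 0 + trib (k+2) + trib (k+1)" by (simp add: q0_def)
  note ar = arith_step[of k 0, folded q0e]
  have h1: "q0 + 1 = ff k" by (simp add: q0_def ff_def)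
  have h2: "ff k + ll k - 1 = q0 + ll k" using h1 hh_pos[of k] by (simp add: ll_def)
  have P: "per (trib k) (q0+1) (q0 + ll k)" using Suc h1 h2 by simp
  have le: "q0 + trib k \<le> q0 + ll k" by (simp add: ll_def)
  from fwd[OF P le] ar show ?case by (simp add: add.commute)
qed




lemma per_sub: "per L i j \<Longrightarrow> i \<le> i' \<Longrightarrow> j' \<le> j \<Longrightarrow> per L i' j'"
  by (auto simp: per_def)

lemma extend_run:
  assumes P: "per L i j" and i1: "1 \<le> i" and L1: "1 \<le> L" and ij: "i + L \<le> j"
  shows "\<exists>s e. s \<le> i \<and> j \<le> e \<and> mrun L s e"
proof -
  define s where "s = (LEAST s'. 1 \<le> s' \<and> per L s' j)"
  have sP: "1 \<le> s \<and> per L s j" unfolding s_def by (rule LeastI[of _ i]) (use P i1 in auto)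
  have si: "s \<le> i" unfolding s_def by (rule Least_le) (use P i1 in auto)
  have left: "s = 1 \<or> tw (s - 1) \<noteq> tw (s - 1 + L)"
  proof (rule ccontr)
    assume h: "\<not> ?thesis"
    have "per L (s - 1) j" unfolding per_def
    proof (intro allI impI)
      fix z assume z: "s - 1 \<le> z" "z + L \<le> j"
      show "tw z = tw (z + L)"
      proof (cases "z = s - 1")
        case True thus ?thesis using h by simp
      next
        case False hence "s \<le> z" using z by simp
        thus ?thesis using sP z by (simp add: per_def)
      qed
    qed
    moreover have "1 \<le> s - 1" using sP h by (cases s) auto
    ultimately have "s \<le> s - 1" unfolding s_def by (intro Least_le) simp
    thus False using sP by (cases s) auto
  qed
  obtain y where y: "y \<ge> s" "tw y \<noteq> tw (y + L)" using not_evper[OF L1, of s] by auto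
  have bnd: "\<And>e'. per L s e' \<Longrightarrow> e' < y + L" using y unfolding per_def by (meson not_less)
  define e where "e = (GREATEST e'. per L s e')"
  have eP: "per L s e" unfolding e_def by (rule GreatestI_nat[where P="\<lambda>e'. per L s e'"]) (use sP bnd in \<open>auto intro: less_imp_le\<close>)
  have je: "j \<le> e" unfolding e_def by (rule Greatest_le_nat[where P="\<lambda>e'. per L s e'"]) (use sP bnd in \<open>auto intro: less_imp_le\<close>)
  have right: "tw (e + 1) \<noteq> tw (e + 1 - L)"
  proof
    assume h: "tw (e + 1) = tw (e + 1 - L)"
    have "per L s (e+1)" unfolding per_def
    proof (intro allI impI)
      fix z assume z: "s \<le> z" "z + L \<le> e + 1"
      show "tw z = tw (z + L)"
      proof (cases "z + L \<le> e")
        case True thus ?thesis using eP z by (simp add: per_def)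
      next
        case False
        hence "z = e + 1 - L" using z by simp
        thus ?thesis using h False z by simp
      qed
    qed
    hence "e + 1 \<le> e" unfolding e_def by (rule Greatest_le_nat[where P="\<lambda>e'. per L s e'"]) (use bnd in \<open>auto intro: less_imp_le\<close>)
    thus False by simp
  qed
  have "mrun L s e" unfolding mrun_def using L1 sP left right eP je ij si by auto
  thus ?thesis using si je by blast
qed

definition cubeL :: "nat \<Rightarrow> nat \<Rightarrow> bool" where
  "cubeL L n \<longleftrightarrow> 1 \<le> L \<and> 3 * L \<le> n \<and> per L (n + 1 - 3 * L) n"

lemma cube_class:
  assumes "per L i n" "1 \<le> i" "1 \<le> L" "i + 3 * L \<le> n + 1"
  shows "\<exists>k x. L = trib k \<and> (S ^^ (k+4)) x + ff k \<le> i \<and> n \<le> (S ^^ (k+4)) x + ff k + ll k - 1"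
proof -
  have "i + L \<le> n" using assms(3,4) by linarith
  then obtain s e where se: "s \<le> i" "n \<le> e" "mrun L s e" using extend_run[OF assms(1,2,3)] by auto
  have "s + 3 * L \<le> e + 2" using se assms(4) by simp
  from classify[OF se(3) this] obtain k x where "L = trib k" "s = (S ^^ (k+4)) x + ff k" "e = s + ll k - 1"
    by blast
  thus ?thesis using se by blast
qed

lemma trib_less_Suc: "trib k < trib (Suc k)"
proof (cases k)
  case 0 thus ?thesis by simp
next
  case (Suc j)
  have "trib (Suc (Suc j)) = trib (Suc j) + trib j + trib (j - 1)" by (rule trib_rec')
  thus ?thesis using Suc trib_pos[of j] by simp
qed

lemma trib_strict: "i < j \<Longrightarrow> trib i < trib j"
  by (induction j) (auto simp: less_Suc_eq intro: less_trans[OF _ trib_less_Suc] trib_less_Suc)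

lemma ll_small: "ll k < 3 * trib (Suc k)"
proof -
  have a: "2 * hh (Suc k) + 3 = trib (k+2) + trib k" using hh2[of "Suc k"] by simp
  have b: "trib (k+2) = trib (k+1) + trib k + trib (k - 1)" using trib_rec'[of k] by simp
  have c: "trib (k - 1) \<le> trib k" "trib k \<le> trib (k+1)" by (auto intro: trib_mono)
  show ?thesis using a b c by (simp add: ll_def)
qed

lemma per_mod: assumes "per L i n" "1 \<le> L" "i + a \<le> n" shows "tw (i + a) = tw (i + a mod L)"
  using assms(3)
proof (induction a rule: less_induct)
  case (less a)
  show ?case
  proof (cases "a < L")
    case True thus ?thesis by simp
  next
    case False
    have "tw (i + (a - L)) = tw (i + (a - L) + L)" using assms(1) less.prems False by (simp add: per_def)
    moreover have "i + (a - L) + L = i + a" using False by simp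
    moreover have "tw (i + (a - L)) = tw (i + (a - L) mod L)" using less.IH[of "a - L"] less.prems assms(2) False by simp
    moreover have "(a - L) mod L = a mod L" using False by (simp add: le_mod_geq)
    ultimately show ?thesis by simp
  qed
qed

lemma no_inner_occ:
  assumes c: "cubeL L n" and j: "n + 1 - 3*L < j" "j < n + 1 - 3*L + 2*L" "j \<noteq> n + 1 - 3*L + L"
  shows "fac j L \<noteq> fac (n + 1 - 3*L) L"
proof
  define i where "i = n + 1 - 3*L"
  assume eq: "fac j L = fac (n + 1 - 3*L) L"
  have L1: "1 \<le> L" and Ln: "3*L \<le> n" and P: "per L i n" using c by (auto simp: cubeL_def i_def)
  have i1: "1 \<le> i" "i + 3*L = n + 1" using Ln i_def by auto
  define d where "d = j - i"
  have d: "0 < d" "d < 2*L" "d \<noteq> L" "j = i + d" using j i_def d_def by auto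
  define r where "r = d mod L"
  have r: "0 < r" "r < L"
  proof -
    show "r < L" using L1 r_def by simp
    have "d mod L \<noteq> 0"
    proof
      assume "d mod L = 0"
      then obtain c where c: "d = L * c" by blast
      have "c \<noteq> 0" using c d by auto
      moreover have "c \<noteq> 1" using c d by auto
      moreover have "c < 2" using c d(2) by (metis mult.commute mult_less_cancel2)
      ultimately show False by simp
    qed
    thus "0 < r" using r_def by simp
  qed
  have sh: "\<And>b. b < L \<Longrightarrow> tw (i + (r + b) mod L) = tw (i + b)"
  proof -
    fix b assume b: "b < L"
    have "tw (j + b) = tw (i + b)" using fac_eq_tw[OF eq b] i_def by simp
    moreover have "tw (i + (d + b)) = tw (i + (d + b) mod L)" using per_mod[OF P L1, of "d+b"] d b i1 by simp
    moreover have "(d + b) mod L = (r + b) mod L" using r_def by (simp add: mod_add_left_eq)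
    ultimately show "tw (i + (r + b) mod L) = tw (i + b)" using d by (simp add: add.assoc)
  qed
  have Pr: "per r i n" unfolding per_def
  proof (intro allI impI)
    fix y assume y: "i \<le> y" "y + r \<le> n"
    define z where "z = y - i"
    have "tw (i + (z + r)) = tw (i + (z + r) mod L)" using per_mod[OF P L1, of "z + r"] y z_def by simp
    also have "(z + r) mod L = (r + z mod L) mod L" by (simp add: mod_add_right_eq add.commute)
    also have "tw (i + (r + z mod L) mod L) = tw (i + z mod L)" using sh[of "z mod L"] L1 by simp
    also have "tw (i + z mod L) = tw (i + z)" using per_mod[OF P L1, of z] y z_def by simp
    finally show "tw y = tw (y + r)" using y z_def by (simp add: add.assoc)
  qed
  obtain k x where kx: "L = trib k" using cube_class[OF P i1(1) L1] i1 by auto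
  have r1: "1 \<le> r" using r by simp
  have "i + 3 * r \<le> n + 1" using r i1 by simp
  then obtain k' x' where kx': "r = trib k'" "(S ^^ (k'+4)) x' + ff k' \<le> i" "n \<le> (S ^^ (k'+4)) x' + ff k' + ll k' - 1"
    using cube_class[OF Pr i1(1) r1] by blast
  have "k' < k"
  proof (rule ccontr)
    assume "\<not> k' < k" hence "trib k \<le> trib k'" by (simp add: trib_mono)
    thus False using kx kx' r by simp
  qed
  hence "trib (Suc k') \<le> L" using kx trib_mono by simp
  moreover have "3 * L \<le> ll k'" using kx' i1 by linarith
  ultimately show False using ll_small[of k'] by linarith
qed




lemma occurs_at_iff: "occurs_at w i \<longleftrightarrow> 1 \<le> i \<and> fac i (length w) = w"
proof -
  have "(\<forall>k < length w. tw (i + k) = w ! k) \<longleftrightarrow> fac i (length w) = w"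
  proof
    assume "\<forall>k < length w. tw (i + k) = w ! k"
    thus "fac i (length w) = w" by (intro nth_equalityI) (auto simp: fac_nth)
  next
    assume "fac i (length w) = w"
    thus "\<forall>k < length w. tw (i + k) = w ! k" by (metis fac_nth)
  qed
  thus ?thesis by (simp add: occurs_at_def)
qed

lemma occ_per: assumes "fac a L = w" "fac (a+L) L = w" "a \<le> y" "y < a + L" shows "tw y = tw (y + L)"
proof -
  have "tw (a + (y - a)) = tw (a + L + (y - a))" using fac_eq_tw[of a L "a + L" "y - a"] assms by simp
  thus ?thesis using assms by (simp add: add.commute add.left_commute)
qed

definition occset :: "letter list \<Rightarrow> nat \<Rightarrow> nat set" where
  "occset w x = {j. j < x \<and> occurs_at w j}"

lemma occset_finite: "finite (occset w x)" unfolding occset_def by auto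

lemma per_fac_shift: "per L i n \<Longrightarrow> i \<le> a \<Longrightarrow> a + 2*L \<le> n + 1 \<Longrightarrow> fac (a + L) L = fac a L"
  by (intro fac_eqI) (auto simp: per_def add.commute add.left_commute)

lemma cube_iff:
  "cube_ending_at w p n \<longleftrightarrow>
     (cubeL (length w) n \<and> w = fac (n + 1 - 3 * length w) (length w)
       \<and> p = card (occset w (n + 1 - 3 * length w)) + 1)"
  (is "?A \<longleftrightarrow> ?B")
proof
  assume A: ?A
  define L where "L = length w"
  have w: "w \<noteq> []" and ex: "\<exists>i. nth_occ w p i \<and> nth_occ w (p + 1) (i + L) \<and>
      nth_occ w (p + 2) (i + 2 * L) \<and> i + 3 * L - 1 = n"
    using A unfolding cube_ending_at_def L_def by blast+
  then obtain i where h: "nth_occ w p i" "nth_occ w (p + 1) (i + L)"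
    "nth_occ w (p + 2) (i + 2 * L)" "i + 3 * L - 1 = n" by blast
  have L1: "1 \<le> L" using w L_def by (cases w) auto
  have h1: "1 \<le> p" "occurs_at w i" "card (occset w i) = p - 1"
    using h(1) unfolding nth_occ_def occset_def by blast+
  have o1: "1 \<le> i" "fac i L = w" using h1(2) unfolding occurs_at_iff L_def by blast+
  have "occurs_at w (i + L)" using h(2) unfolding nth_occ_def by blast
  hence o2: "fac (i + L) L = w" unfolding occurs_at_iff L_def by blast
  have "occurs_at w (i + 2 * L)" using h(3) unfolding nth_occ_def by blast
  hence o3: "fac (i + L + L) L = w" unfolding occurs_at_iff L_def by (simp add: mult_2 add.assoc)
  have n: "3 * L \<le> n" "i = n + 1 - 3 * L" using h(4) o1 L1 by linarith+
  have "per L i n" unfolding per_def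
  proof (intro allI impI)
    fix y assume y: "i \<le> y" "y + L \<le> n"
    show "tw y = tw (y + L)"
    proof (cases "y < i + L")
      case True show ?thesis using occ_per[OF o1(2) o2 y(1) True] .
    next
      case False
      have "y < i + L + L" using y h(4) L1 by linarith
      thus ?thesis using occ_per[OF o2 o3 _ ] False by simp
    qed
  qed
  hence "cubeL L n" using L1 n by (simp add: cubeL_def)
  moreover have "p = card (occset w (n + 1 - 3 * L)) + 1" using h1 n by simp
  ultimately show ?B using o1 n unfolding L_def by simp
next
  assume ?B
  define L where "L = length w"
  define i where "i = n + 1 - 3 * L"
  have c: "cubeL L n" and w: "w = fac i L" and p: "p = card (occset w i) + 1"
    using \<open>?B\<close> unfolding L_def[symmetric] i_def[symmetric] by auto
  have Lw: "length w = L" by (simp add: L_def)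
  have L1: "1 \<le> L" and Ln: "3 * L \<le> n" and P: "per L i n" using c by (auto simp: cubeL_def i_def)
  have i1: "1 \<le> i" "i + 3 * L = n + 1" using Ln i_def by auto
  have f2: "fac (i + L) L = w" using per_fac_shift[OF P, of i] i1 w by simp
  have f3: "fac (i + L + L) L = w" using per_fac_shift[OF P, of "i + L"] i1 f2 by simp
  have occ1: "occurs_at w i" "occurs_at w (i + L)" "occurs_at w (i + 2 * L)"
    using i1 w f2 f3 Lw by (auto simp: occurs_at_iff mult_2 add.assoc)
  have noocc: "\<And>j. i < j \<Longrightarrow> j < i + 2 * L \<Longrightarrow> j \<noteq> i + L \<Longrightarrow> \<not> occurs_at w j"
  proof -
    fix j assume j: "i < j" "j < i + 2 * L" "j \<noteq> i + L"
    have "fac j L \<noteq> fac (n + 1 - 3*L) L" by (rule no_inner_occ[OF c]) (use j i_def in auto)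
    thus "\<not> occurs_at w j" using w Lw unfolding i_def[symmetric] by (auto simp: occurs_at_iff)
  qed
  have mem: "\<And>j x. j \<in> occset w x \<longleftrightarrow> j < x \<and> occurs_at w j" by (simp add: occset_def)
  have s1: "occset w (i + L) = insert i (occset w i)"
  proof (rule set_eqI)
    fix j
    consider "j < i" | "j = i" | "i < j" "j < i + L" | "i + L \<le> j" by linarith
    thus "j \<in> occset w (i + L) \<longleftrightarrow> j \<in> insert i (occset w i)"
    proof cases
      case 3 thus ?thesis using noocc[of j] L1 by (simp add: mem)
    qed (use occ1 L1 in \<open>auto simp: mem\<close>)
  qed
  have s2: "occset w (i + 2 * L) = insert (i + L) (insert i (occset w i))"
  proof (rule set_eqI)
    fix j
    consider "j < i" | "j = i" | "i < j" "j < i + L" | "j = i + L" | "i + L < j" "j < i + 2*L" | "i + 2*L \<le> j"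
      by linarith
    thus "j \<in> occset w (i + 2 * L) \<longleftrightarrow> j \<in> insert (i + L) (insert i (occset w i))"
    proof cases
      case 3 thus ?thesis using noocc[of j] L1 by (simp add: mem)
    next
      case 5 thus ?thesis using noocc[of j] L1 by (simp add: mem)
    qed (use occ1 L1 in \<open>auto simp: mem\<close>)
  qed
  have c1: "card (occset w (i + L)) = p"
    using s1 p occset_finite[of w i] by (simp add: occset_def)
  have c2: "card (occset w (i + 2 * L)) = p + 1"
    using s2 p occset_finite[of w i] L1 by (simp add: occset_def)
  have "w \<noteq> []" using L1 Lw by auto
  moreover have "nth_occ w p i" using occ1 p by (simp add: nth_occ_def occset_def)
  moreover have "nth_occ w (p + 1) (i + L)" using occ1 c1 by (simp add: nth_occ_def occset_def)
  moreover have "nth_occ w (p + 2) (i + 2 * L)" using occ1 c2 by (simp add: nth_occ_def occset_def)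
  moreover have "i + 3 * L - 1 = n" using i1 by simp
  ultimately show ?A unfolding cube_ending_at_def Lw by blast
qed

lemma dcube_card: "dcube n = card {L. cubeL L n}"
proof -
  define f where "f L = (fac (n + 1 - 3 * L) L, card (occset (fac (n + 1 - 3 * L) L) (n + 1 - 3 * L)) + 1)" for L
  have "{(w, p). cube_ending_at w p n} = f ` {L. cubeL L n}"
  proof (rule set_eqI)
    fix z :: "letter list \<times> nat"
    obtain w p where z: "z = (w, p)" by (cases z)
    show "z \<in> {(w, p). cube_ending_at w p n} \<longleftrightarrow> z \<in> f ` {L. cubeL L n}"
      unfolding z cube_iff f_def by auto
  qed
  moreover have "inj_on f {L. cubeL L n}" unfolding f_def by (intro inj_onI) (metis fac_length prod.inject)
  ultimately show ?thesis unfolding dcube_def by (simp add: card_image)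
qed

lemma cubeL_finite: "finite {L. cubeL L n}"
  by (rule finite_subset[of _ "{..n}"]) (auto simp: cubeL_def)




lemma Spow_less_iff: "(S ^^ j) a < (S ^^ j) b \<longleftrightarrow> a < b"
  by (induction j) auto

lemma ff_mono: "k \<le> k' \<Longrightarrow> ff k \<le> ff k'"
  unfolding ff_def by (intro add_mono trib_mono) auto

lemma trib_Suc_le: "trib (Suc k) \<le> 2 * trib k"
proof (cases "k \<ge> 2")
  case True
  then obtain i where i: "k = i + 2" by (metis add.commute le_Suc_ex)
  have a: "trib (Suc k) = trib k + trib (i+1) + trib i" by (rule trib_rec_at) (simp_all add: i)
  have b: "trib k = trib (i+1) + trib i + trib (i - 1)" using trib_rec'[of i] i by simp
  show ?thesis using a b by simp
next
  case False
  hence "k = 0 \<or> k = 1" by auto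
  thus ?thesis by auto
qed

lemma trib_k2_le: "trib (k+2) \<le> 4 * trib k"
proof -
  have "trib (k+2) = trib (k+1) + trib k + trib (k - 1)" using trib_rec'[of k] by simp
  moreover have "trib (k+1) \<le> 2 * trib k" using trib_Suc_le[of k] by simp
  moreover have "trib (k - 1) \<le> trib k" by (rule trib_mono) simp
  ultimately show ?thesis by linarith
qed

lemma hh_lt_3trib: "hh (Suc k) < 3 * trib k"
proof -
  have "2 * hh (Suc k) + 3 = trib (k+2) + trib k" using hh2[of "Suc k"] by simp
  thus ?thesis using trib_k2_le[of k] trib_pos[of k] by linarith
qed

lemma cube_run:
  assumes "cubeL L n"
  shows "\<exists>k x. L = trib k \<and> (S ^^ (k+4)) x + ff k + 3 * L \<le> n + 1 \<and> n + 1 \<le> (S ^^ (k+4)) x + ff k + ll k"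
proof -
  have L1: "1 \<le> L" and Ln: "3 * L \<le> n" and P: "per L (n + 1 - 3*L) n" using assms by (auto simp: cubeL_def)
  have i1: "1 \<le> n + 1 - 3*L" "n + 1 - 3*L + 3*L \<le> n + 1" using Ln by auto
  obtain k x where "L = trib k" "(S ^^ (k+4)) x + ff k \<le> n + 1 - 3*L" "n \<le> (S ^^ (k+4)) x + ff k + ll k - 1"
    using cube_class[OF P i1(1) L1 i1(2)] by blast
  moreover have "ff k \<ge> 1" by (simp add: ff_def)
  ultimately show ?thesis using Ln by (intro exI[of _ k] exI[of _ x]) auto
qed

lemma run_cube:
  assumes "ff k + 3 * trib k \<le> n + 1" "n + 1 \<le> ff k + ll k"
  shows "cubeL (trib k) n"
proof -
  have P: "per (trib k) (ff k) (ff k + ll k - 1)" by (rule exist_run)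
  have "per (trib k) (n + 1 - 3 * trib k) n" by (rule per_sub[OF P]) (use assms in auto)
  moreover have "ff k \<ge> 1" by (simp add: ff_def)
  ultimately show ?thesis using assms trib_pos[of k] by (auto simp: cubeL_def)
qed

lemma ll_small_k: "k \<le> 2 \<Longrightarrow> ll k < 3 * trib k"
proof -
  assume "k \<le> 2"
  hence "k = 0 \<or> k = 1 \<or> k = 2" by auto
  thus ?thesis using hh_1 hh_2 hh_3 by (auto simp: ll_def numeral_eq_Suc)
qed

lemma no_small_cube: assumes "n \<le> 57" shows "\<not> cubeL L n"
proof
  assume "cubeL L n"
  then obtain k x where kx: "L = trib k" "(S ^^ (k+4)) x + ff k + 3 * L \<le> n + 1" "n + 1 \<le> (S ^^ (k+4)) x + ff k + ll k"
    using cube_run by blast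
  have "3 * trib k \<le> ll k" using kx by linarith
  hence k3: "k \<ge> 3" using ll_small_k[of k] by linarith
  have "ff 3 \<le> ff k" by (rule ff_mono[OF k3])
  moreover have "ff 3 = 38" by (simp add: ff_def trib_4 trib_5)
  moreover have "trib 3 \<le> trib k" by (rule trib_mono[OF k3])
  ultimately show False using kx assms by (simp add: trib_3)
qed

lemma dcube_small: "n \<le> 57 \<Longrightarrow> dcube n = 0"
  using no_small_cube by (simp add: dcube_card)

lemma hh_step: assumes "m \<ge> 2" shows "hh m = hh (m - 1) + trib (m - 1)"
proof -
  have a: "2 * hh m + 3 = trib (Suc m) + trib (m - 1)" by (rule hh2)
  have e: "Suc (m - 1) = m" "m - 1 - 1 = m - 2" using assms by simp_all
  have b: "2 * hh (m-1) + 3 = trib m + trib (m - 2)" using hh2[of "m-1"] by (simp only: e)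
  have c: "trib (Suc m) = trib m + trib (m - 1) + trib (m - 2)" by (rule trib_rec_at) (use assms in simp_all)
  show ?thesis using a b c by linarith
qed

lemma shift_per:
  assumes T: "\<And>z. 1 \<le> z \<Longrightarrow> z \<le> H \<Longrightarrow> tw (t + z) = tw z" and a: "1 \<le> a" and b: "b \<le> H"
  shows "per LL (a + t) (b + t) \<longleftrightarrow> per LL a b"
proof -
  have e: "\<And>y. a \<le> y \<Longrightarrow> y \<le> b \<Longrightarrow> tw (y + t) = tw y" using T a b by (simp add: add.commute)
  show ?thesis unfolding per_def
  proof (intro iffI allI impI)
    fix y assume h: "\<forall>y. a + t \<le> y \<longrightarrow> y + LL \<le> b + t \<longrightarrow> tw y = tw (y +LL)" and y: "a \<le> y" "y + LL \<le> b"
    have "tw (y + t) = tw (y + t +LL)" using h y by simp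
    thus "tw y = tw (y +LL)" using e[of y] e[of "y + LL"] y by (simp add: add.commute add.left_commute)
  next
    fix y assume h: "\<forall>y. a \<le> y \<longrightarrow> y + LL \<le> b \<longrightarrow> tw y = tw (y +LL)" and y: "a + t \<le> y" "y + LL \<le> b + t"
    have "tw (y - t) = tw (y - t +LL)" using h y by simp
    moreover have "y - t + t = y" "y - t + LL + t = y + LL" using y by simp_all
    ultimately show "tw y = tw (y +LL)" using e[of "y - t"] e[of "y - t + LL"] y by simp
  qed
qed

lemma recursion:
  assumes m: "m \<ge> 4" and n: "hh (m - 1) < n" "n \<le> hh m"
  shows "dcube n = dcube (n - trib (m - 1)) +
     (if ff (m-4) + 3 * trib (m-4) \<le> n + 1 \<and> n + 1 \<le> ff (m-4) + ll (m-4) then 1 else 0)"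
proof -
  define t where "t = trib (m - 1)"
  define k0 where "k0 = m - 4"
  have hm: "hh m = hh (m-1) + t" using hh_step[of m] m t_def by simp
  have hm1: "hh (m-1) = t + hh (m-4)" using hh_rec[of "m-1"] m t_def by (simp add: diff_diff_left)
  have tn: "t < n" using hm1 n by simp
  have ntH: "n - t \<le> hh (m-1)" using n hm by simp
  have T: "\<And>z. 1 \<le> z \<Longrightarrow> z \<le> hh (m-1) \<Longrightarrow> tw (t + z) = tw z" using trans_tw t_def by simp
  let ?A = "{L. cubeL L n \<and> 3 * L \<le> n - t}"
  let ?B = "{L. cubeL L n \<and> n - t < 3 * L}"
  let ?c = "ff k0 + 3 * trib k0 \<le> n + 1 \<and> n + 1 \<le> ff k0 + ll k0"
  have split: "{L. cubeL L n} = ?A \<union> ?B" by auto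
  have disj: "?A \<inter> ?B = {}" by auto
  have fA: "finite ?A" "finite ?B" using cubeL_finite[of n] by (auto intro: finite_subset)
  have A: "?A = {L. cubeL L (n - t)}"
  proof (rule set_eqI, rule iffI)
    fix L assume "L \<in> ?A"
    hence c: "cubeL L n" and l: "3 * L \<le> n - t" by auto
    have L1: "1 \<le> L" and P: "per L (n + 1 - 3 * L) n" using c by (auto simp: cubeL_def)
    have e: "n + 1 - 3 * L = (n - t + 1 - 3 * L) + t" "n = (n - t) + t" using l tn by auto
    have a1: "1 \<le> n - t + 1 - 3 * L" using l by simp
    have "per L ((n - t + 1 - 3 * L) + t) ((n - t) + t) \<longleftrightarrow> per L (n - t + 1 - 3 * L) (n - t)"
      by (rule shift_per[OF T a1 ntH])
    hence "per L (n - t + 1 - 3 * L) (n - t)" using P e by simp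
    thus "L \<in> {L. cubeL L (n - t)}" using L1 l by (simp add: cubeL_def)
  next
    fix L assume "L \<in> {L. cubeL L (n - t)}"
    hence L1: "1 \<le> L" and l: "3 * L \<le> n - t" and P: "per L (n - t + 1 - 3 * L) (n - t)" by (auto simp: cubeL_def)
    have e: "n + 1 - 3 * L = (n - t + 1 - 3 * L) + t" "n = (n - t) + t" using l tn by auto
    have a1: "1 \<le> n - t + 1 - 3 * L" using l by simp
    have "per L ((n - t + 1 - 3 * L) + t) ((n - t) + t) \<longleftrightarrow> per L (n - t + 1 - 3 * L) (n - t)"
      by (rule shift_per[OF T a1 ntH])
    hence "per L (n + 1 - 3 * L) n" using P e by simp
    thus "L \<in> ?A" using L1 l by (simp add: cubeL_def)
  qed
  have B: "?B = (if ?c then {trib k0} else {})"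
  proof -
    have sub: "?B \<subseteq> {L. ?c \<and> L = trib k0}"
    proof
      fix L assume "L \<in> ?B"
      hence c: "cubeL L n" and l: "n - t < 3 * L" by auto
      obtain k x where kx: "L = trib k" "(S ^^ (k+4)) x + ff k + 3 * L \<le> n + 1" "n + 1 \<le> (S ^^ (k+4)) x + ff k + ll k"
        using cube_run[OF c] by blast
      have st: "(S ^^ (k+4)) x + ff k \<le> t" using kx(2) l tn by linarith
      consider "k \<ge> m - 3" | "k = k0" | "k < k0" unfolding k0_def by linarith
      thus "L \<in> {L. ?c \<and> L = trib k0}"
      proof cases
        case 1
        have "ff (m-3) \<le> ff k" by (rule ff_mono[OF 1])
        moreover have "ff (m-3) = trib (m-1) + trib (m-2) + 1"
        proof -
          have e: "m - 3 + 2 = m - 1" "m - 3 + 1 = m - 2" using m by simp_all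
          show ?thesis by (simp only: ff_def e)
        qed
        ultimately show ?thesis using st t_def by simp
      next
        case 2
        have x0: "x = 0"
        proof (rule ccontr)
          assume "x \<noteq> 0"
          hence "(S ^^ m) (trib 0) \<le> (S ^^ m) x" using Spow_less_iff[of m x "trib 0"] by (simp add: not_less)
          moreover have "(S ^^ m) (trib 0) = trib m" using Spow_trib[of m 0] by simp
          moreover have "trib (m - 1) < trib m" using trib_strict[of "m-1" m] m by simp
          moreover have "k + 4 = m" using 2 k0_def m by simp
          ultimately show False using st t_def by simp
        qed
        thus ?thesis using kx 2 by simp
      next
        case 3
        define j where "j = k + 4"
        have j: "j \<le> m - 1" "j \<ge> 1" using 3 k0_def j_def by auto
        have tj: "(S ^^ j) (trib (m - 1 - j)) = t" using Spow_trib[of j "m - 1 - j"] j t_def by simp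
        have "(S ^^ j) x < (S ^^ j) (trib (m - 1 - j))" using st tj j_def by (simp add: ff_def)
        hence "Suc x \<le> trib (m - 1 - j)" using Spow_less_iff by simp
        hence X1: "(S ^^ j) (Suc x) \<le> t" using Spow_mono tj by metis
        have X2: "(S ^^ j) (Suc x) \<ge> (S ^^ j) x + trib (j - 1)" by (rule Spow_step[OF j(2)])
        have tj1: "trib (j - 1) = trib (k+2) + trib (k+1) + trib k" by (rule trib_rec_at) (simp_all add: j_def)
        have hk: "hh (Suc k) \<le> hh (m - 4)" by (rule hh_mono) (use 3 k0_def in simp)
        have kx3: "n + 1 \<le> (S ^^ j) x + ff k + ll k" using kx(3) j_def by simp
        have "n \<le> hh (m-1)" using X1 X2 tj1 hk kx3 hm1 unfolding ff_def ll_def by linarith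
        thus ?thesis using n by simp
      qed
    qed
    have sup: "?c \<Longrightarrow> trib k0 \<in> ?B"
    proof -
      assume c: ?c
      have "cubeL (trib k0) n" using run_cube c by blast
      moreover have "n - t < 3 * trib k0"
      proof -
        have "t = trib (k0+2) + trib (k0+1) + trib k0" unfolding t_def by (rule trib_rec_at) (use m k0_def in simp_all)
        moreover have "hh (Suc k0) < 3 * trib k0" by (rule hh_lt_3trib)
        ultimately show ?thesis using c unfolding ff_def ll_def by linarith
      qed
      ultimately show "trib k0 \<in> ?B" by simp
    qed
    show ?thesis using sub sup by auto
  qed
  have "dcube n = card ?A + card ?B" unfolding dcube_card split using card_Un_disjoint[OF fA disj] .
  moreover have "card ?A = dcube (n - t)" unfolding A dcube_card ..
  moreover have "card ?B = (if ?c then 1 else 0)" unfolding B by simp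
  ultimately show ?thesis unfolding t_def k0_def by simp
qed




lemma hh_4: "hh 4 = 14" using hh2[of 4] by (simp add: trib_3 trib_5)
lemma hh_5: "hh 5 = 27" using hh2[of 5] by (simp add: trib_4 trib_6)
lemma hh_6: "hh 6 = 51" using hh2[of 6] by (simp add: trib_5 trib_7)
lemma hh_7: "hh 7 = 95" using hh2[of 7] by (simp add: trib_6 trib_8)
lemma hh_8: "hh 8 = 176" using hh2[of 8] by (simp add: trib_7 trib_9)
lemma hh_9: "hh 9 = 325" using hh2[of 9] by (simp add: trib_8 trib_10)

lemma ff_3: "ff 3 = 38" and ff_4: "ff 4 = 69" and ff_5: "ff 5 = 126"
  by (simp_all add: ff_def trib_4 trib_5 trib_6 trib_7)
lemma ll_3: "ll 3 = 21" and ll_4: "ll 4 = 40" and ll_5: "ll 5 = 75"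
  unfolding ll_def by (simp_all add: trib_3 trib_4 trib_5 hh_4 hh_5 hh_6)

lemma dvec_upt_nth: "i < b - a \<Longrightarrow> dvec [a..<b] ! i = dcube (a + i)" by (simp add: dvec_def)
lemma dvec_upt_len: "length (dvec [a..<b]) = b - a" by (simp add: dvec_def)

lemma gamma_hi_hh: "gamma_hi m = hh m" by (simp add: gamma_hi_def hh_def)
lemma gamma_lo_hh: assumes "m \<ge> 2" shows "gamma_lo m = hh (m - 1) + 1"
proof -
  have e: "Suc (m - 1) = m" "m - 1 - 1 = m - 2" using assms by simp_all
  have "2 * hh (m - 1) + 3 = trib m + trib (m - 2)" using hh2[of "m - 1"] by (simp only: e)
  thus ?thesis unfolding gamma_lo_def by linarith
qed

lemma Gamma1_hh: "m \<ge> 2 \<Longrightarrow> Gamma1 m = [hh (m - 1) + 1 ..< hh m + 1]"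
  by (simp add: Gamma1_def gamma_hi_hh gamma_lo_hh)

lemma d7: assumes "51 < n" "n \<le> 95" shows "dcube n = (if n = 58 then 1 else 0)"
proof -
  have "dcube n = dcube (n - trib (7 - 1)) +
     (if ff (7-4) + 3 * trib (7-4) \<le> n + 1 \<and> n + 1 \<le> ff (7-4) + ll (7-4) then 1 else 0)"
    by (rule recursion) (use assms hh_6 hh_7 in simp_all)
  moreover have "dcube (n - trib 6) = 0" using assms by (intro dcube_small) (simp add: trib_6)
  ultimately show ?thesis by (simp add: ff_3 ll_3 trib_3 trib_6)
qed

lemma d8: assumes "95 < n" "n \<le> 176" shows "dcube n = (if n = 107 \<or> n = 108 \<or> n = 139 then 1 else 0)"
proof -
  have "dcube n = dcube (n - trib (8 - 1)) +
     (if ff (8-4) + 3 * trib (8-4) \<le> n + 1 \<and> n + 1 \<le> ff (8-4) + ll (8-4) then 1 else 0)"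
    by (rule recursion) (use assms hh_7 hh_8 in simp_all)
  moreover have "dcube (n - trib 7) = (if n - 81 = 58 then 1 else 0)"
  proof (cases "n - 81 \<le> 51")
    case True thus ?thesis using dcube_small[of "n - 81"] by (simp add: trib_7)
  next
    case False thus ?thesis using d7[of "n - 81"] assms by (simp add: trib_7)
  qed
  ultimately show ?thesis using assms by (auto simp add: ff_4 ll_4 trib_4 trib_7)
qed

lemma d9: assumes "176 < n" "n \<le> 325"
  shows "dcube n = (if (197 \<le> n \<and> n \<le> 200) \<or> n = 207 \<or> n = 256 \<or> n = 257 \<or> n = 288 then 1 else 0)"
proof -
  have "dcube n = dcube (n - trib (9 - 1)) +
     (if ff (9-4) + 3 * trib (9-4) \<le> n + 1 \<and> n + 1 \<le> ff (9-4) + ll (9-4) then 1 else 0)"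
    by (rule recursion) (use assms hh_8 hh_9 in simp_all)
  moreover have "dcube (n - trib 8) = (if n - 149 = 58 \<or> n - 149 = 107 \<or> n - 149 = 108 \<or> n - 149 = 139 then 1 else 0)"
  proof -
    consider "n - 149 \<le> 51" | "51 < n - 149" "n - 149 \<le> 95" | "95 < n - 149" using assms by linarith
    thus ?thesis
    proof cases
      case 1 thus ?thesis using dcube_small[of "n - 149"] by (simp add: trib_8)
    next
      case 2 thus ?thesis using d7[of "n - 149"] by (simp add: trib_8)
    next
      case 3 thus ?thesis using d8[of "n - 149"] assms by (simp add: trib_8)
    qed
  qed
  ultimately show ?thesis using assms by (auto simp add: ff_5 ll_5 trib_5 trib_8)
qed

lemma list_eqI': "length xs = length ys \<Longrightarrow> (\<And>i. i < length xs \<Longrightarrow> xs ! i = ys ! i) \<Longrightarrow> xs = ys"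
  by (rule nth_equalityI)

lemma part7: "dvec (Gamma1 7) = replicate 6 0 @ [1] @ replicate 37 0"
proof (rule nth_equalityI)
  have G: "Gamma1 7 = [52..<96]" using Gamma1_hh[of 7] hh_6 hh_7 by simp
  show "length (dvec (Gamma1 7)) = length (replicate 6 0 @ [1] @ replicate 37 (0::nat))"
    unfolding G dvec_upt_len by simp
  fix i assume "i < length (dvec (Gamma1 7))"
  hence i: "i < 44" unfolding G dvec_upt_len by simp
  have "dvec (Gamma1 7) ! i = dcube (52 + i)" unfolding G using i by (intro dvec_upt_nth) simp
  also have "\<dots> = (if i = 6 then 1 else 0)" using d7[of "52 + i"] i by simp
  also have "\<dots> = (replicate 6 0 @ [1] @ replicate 37 0) ! i" using i by (simp add: nth_append)
  finally show "dvec (Gamma1 7) ! i = (replicate 6 0 @ [1] @ replicate 37 0) ! i" .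
qed

lemma part8: "dvec (Gamma1 8) = replicate 11 0 @ [1, 1] @ replicate 30 0 @ [1] @ replicate 37 0"
proof (rule nth_equalityI)
  have G: "Gamma1 8 = [96..<177]" using Gamma1_hh[of 8] hh_7 hh_8 by simp
  show "length (dvec (Gamma1 8)) = length (replicate 11 0 @ [1, 1] @ replicate 30 0 @ [1] @ replicate 37 (0::nat))"
    unfolding G dvec_upt_len by simp
  fix i assume "i < length (dvec (Gamma1 8))"
  hence i: "i < 81" unfolding G dvec_upt_len by simp
  have "dvec (Gamma1 8) ! i = dcube (96 + i)" unfolding G using i by (intro dvec_upt_nth) simp
  also have "\<dots> = (if i = 11 \<or> i = 12 \<or> i = 43 then 1 else 0)" using d8[of "96 + i"] i by simp
  also have "\<dots> = (replicate 11 0 @ [1, 1] @ replicate 30 0 @ [1] @ replicate 37 0) ! i"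
    using i by (simp add: nth_append nth_Cons') arith
  finally show "dvec (Gamma1 8) ! i = (replicate 11 0 @ [1, 1] @ replicate 30 0 @ [1] @ replicate 37 0) ! i" .
qed

lemma part9: "dvec (Gamma1 9) = replicate 20 0 @ replicate 4 1 @ replicate 6 0 @ [1]
          @ replicate 48 0 @ [1, 1] @ replicate 30 0 @ [1] @ replicate 37 0"
proof (rule nth_equalityI)
  have G: "Gamma1 9 = [177..<326]" using Gamma1_hh[of 9] hh_8 hh_9 by simp
  show "length (dvec (Gamma1 9)) = length (replicate 20 0 @ replicate 4 1 @ replicate 6 0 @ [1]
          @ replicate 48 0 @ [1, 1] @ replicate 30 0 @ [1] @ replicate 37 (0::nat))"
    unfolding G dvec_upt_len by simp
  fix i assume "i < length (dvec (Gamma1 9))"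
  hence i: "i < 149" unfolding G dvec_upt_len by simp
  have "dvec (Gamma1 9) ! i = dcube (177 + i)" unfolding G using i by (intro dvec_upt_nth) simp
  also have "\<dots> = (if (20 \<le> i \<and> i \<le> 23) \<or> i = 30 \<or> i = 79 \<or> i = 80 \<or> i = 111 then 1 else 0)"
    using d9[of "177 + i"] i by simp
  also have "\<dots> = (replicate 20 0 @ replicate 4 1 @ replicate 6 0 @ [1]
          @ replicate 48 0 @ [1, 1] @ replicate 30 0 @ [1] @ replicate 37 0) ! i"
    using i by (simp add: nth_append nth_Cons') arith
  finally show "dvec (Gamma1 9) ! i = (replicate 20 0 @ replicate 4 1 @ replicate 6 0 @ [1]
          @ replicate 48 0 @ [1, 1] @ replicate 30 0 @ [1] @ replicate 37 0) ! i" .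
qed




lemma upt_append3: "a \<le> b \<Longrightarrow> b \<le> c \<Longrightarrow> [a..<b] @ [b..<c] = [a..<c]"
  by (metis le_add_diff_inverse upt_add_eq_append)

lemma general:
  assumes m: "m \<ge> 10"
  shows "(let A = dvec (Gamma1 (m - 3)) @ dvec (Gamma1 (m - 2)) @ dvec (Gamma1 (m - 1));
              B = replicate (nat ((- int (trib (m - 2)) + 5 * int (trib (m - 4)) + 1) div 2)) 0
                  @ replicate (nat ((int (trib (m - 2)) - 3 * int (trib (m - 4)) - 1) div 2)) 1
                  @ replicate (trib (m - 2) + trib (m - 3)) 0
          in length A = length B \<and> dvec (Gamma1 m) = map2 (+) A B)"
proof -
  define t where "t = trib (m - 1)"
  define h1 where "h1 = hh (m - 1)"
  define h4 where "h4 = hh (m - 4)"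
  define t2 where "t2 = trib (m - 2)"
  define t3 where "t3 = trib (m - 3)"
  define t4 where "t4 = trib (m - 4)"
  have F1: "2 * h1 + 3 = trib m + t2"
  proof -
    have e: "Suc (m - 1) = m" "m - 1 - 1 = m - 2" using m by simp_all
    show ?thesis using hh2[of "m - 1"] unfolding h1_def t2_def by (simp only: e)
  qed
  have F2: "2 * hh (m - 3) + 3 = t2 + t4"
  proof -
    have e: "Suc (m - 3) = m - 2" "m - 3 - 1 = m - 4" using m by simp_all
    show ?thesis using hh2[of "m - 3"] unfolding t2_def t4_def by (simp only: e)
  qed
  have F3: "trib m = t + t2 + t3" unfolding t_def t2_def t3_def by (rule trib_rec_at) (use m in simp_all)
  have F4: "t = t2 + t3 + t4" unfolding t_def t2_def t3_def t4_def by (rule trib_rec_at) (use m in simp_all)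
  have F5: "t2 \<le> 4 * t4" using trib_k2_le[of "m - 4"] m unfolding t2_def t4_def
    by (simp add: numeral_eq_Suc Suc_diff_Suc)
  have F6: "3 * t4 + 1 \<le> t2"
  proof -
    have a: "t2 = t3 + t4 + trib (m - 5)" unfolding t2_def t3_def t4_def by (rule trib_rec_at) (use m in simp_all)
    have b: "t3 = t4 + trib (m - 5) + trib (m - 6)" unfolding t3_def t4_def by (rule trib_rec_at) (use m in simp_all)
    have c: "t4 = trib (m - 5) + trib (m - 6) + trib (m - 7)" unfolding t4_def by (rule trib_rec_at) (use m in simp_all)
    have d: "trib (m - 7) < trib (m - 5)" by (rule trib_strict) (use m in simp)
    show ?thesis using a b c d by linarith
  qed
  have ffe: "ff (m - 4) = t2 + t3 + 1"
  proof -
    have e: "m - 4 + 2 = m - 2" "m - 4 + 1 = m - 3" using m by simp_all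
    show ?thesis unfolding t2_def t3_def by (simp only: ff_def e)
  qed
  have lle: "ll (m - 4) = t4 + hh (m - 3)"
  proof -
    have e: "Suc (m - 4) = m - 3" using m by simp
    show ?thesis unfolding t4_def by (simp only: ll_def e)
  qed
  have hm: "hh m = h1 + t" using hh_step[of m] m unfolding h1_def t_def by simp
  have h14: "h1 = t + h4"
  proof -
    have e: "m - 1 - 3 = m - 4" by simp
    show ?thesis using hh_rec[of "m - 1"] m unfolding h1_def h4_def t_def by (simp only: e)
  qed
  define a where "a = ff (m - 4) + 3 * t4 - (h1 + 2)"
  define b where "b = ll (m - 4) + 1 - 3 * t4"
  have ageq: "ff (m - 4) + 3 * t4 = a + h1 + 2" unfolding a_def using F1 F3 F4 F5 ffe by linarith
  have bgeq: "ll (m - 4) + 1 = b + 3 * t4" unfolding b_def using F2 F6 lle by linarith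
  have ab: "a + b = t4" using ageq bgeq F1 F2 F3 F4 ffe lle by linarith
  have inta: "(- int t2 + 5 * int t4 + 1) = 2 * int a"
  proof -
    have "int (ff (m - 4)) + 3 * int t4 = int a + int h1 + 2" using ageq by linarith
    moreover have "2 * int h1 + 3 = int (trib m) + int t2" using F1 by linarith
    moreover have "int (trib m) = int t + int t2 + int t3" using F3 by linarith
    moreover have "int t = int t2 + int t3 + int t4" using F4 by linarith
    moreover have "int (ff (m - 4)) = int t2 + int t3 + 1" using ffe by linarith
    ultimately show ?thesis by linarith
  qed
  have intb: "(int t2 - 3 * int t4 - 1) = 2 * int b"
  proof -
    have "int (ll (m - 4)) + 1 = int b + 3 * int t4" using bgeq by linarith
    moreover have "2 * int (hh (m - 3)) + 3 = int t2 + int t4" using F2 by linarith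
    moreover have "int (ll (m - 4)) = int t4 + int (hh (m - 3))" using lle by linarith
    ultimately show ?thesis by linarith
  qed
  have na: "nat ((- int (trib (m - 2)) + 5 * int (trib (m - 4)) + 1) div 2) = a"
    using inta unfolding t2_def t4_def by simp
  have nb: "nat ((int (trib (m - 2)) - 3 * int (trib (m - 4)) - 1) div 2) = b"
    using intb unfolding t2_def t4_def by simp
  have G: "\<And>k. k \<ge> 2 \<Longrightarrow> dvec (Gamma1 k) = dvec [hh (k - 1) + 1 ..< hh k + 1]" using Gamma1_hh by simp
  have e1: "m - 3 - 1 = m - 4" "m - 2 - 1 = m - 3" "m - 1 - 1 = m - 2" by simp_all
  have mono: "hh (m - 4) \<le> hh (m - 3)" "hh (m - 3) \<le> hh (m - 2)" "hh (m - 2) \<le> hh (m - 1)"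
    by (auto intro: hh_mono)
  have Aeq: "dvec (Gamma1 (m - 3)) @ dvec (Gamma1 (m - 2)) @ dvec (Gamma1 (m - 1)) = dvec [h4 + 1 ..< h1 + 1]"
  proof -
    have "dvec (Gamma1 (m - 3)) @ dvec (Gamma1 (m - 2)) @ dvec (Gamma1 (m - 1)) =
      dvec ([hh (m - 4) + 1 ..< hh (m - 3) + 1] @ [hh (m - 3) + 1 ..< hh (m - 2) + 1] @ [hh (m - 2) + 1 ..< hh (m - 1) + 1])"
      using G[of "m - 3"] G[of "m - 2"] G[of "m - 1"] m unfolding e1 by (simp add: dvec_def)
    also have "[hh (m - 3) + 1 ..< hh (m - 2) + 1] @ [hh (m - 2) + 1 ..< hh (m - 1) + 1] = [hh (m - 3) + 1 ..< hh (m - 1) + 1]"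
      by (rule upt_append3) (use mono in simp_all)
    also have "[hh (m - 4) + 1 ..< hh (m - 3) + 1] @ [hh (m - 3) + 1 ..< hh (m - 1) + 1] = [hh (m - 4) + 1 ..< hh (m - 1) + 1]"
      by (rule upt_append3) (use mono in simp_all)
    finally show ?thesis unfolding h1_def h4_def .
  qed
  have Geq: "dvec (Gamma1 m) = dvec [h1 + 1 ..< h1 + t + 1]" using G[of m] m hm unfolding h1_def by simp
  define A where "A = dvec [h4 + 1 ..< h1 + 1]"
  define B where "B = replicate a (0::nat) @ replicate b 1 @ replicate (t2 + t3) 0"
  have lA: "length A = t" unfolding A_def dvec_upt_len using h14 by simp
  have lB: "length B = t" unfolding B_def using ab F4 by simp
  have lG: "length (dvec (Gamma1 m)) = t" unfolding Geq dvec_upt_len by simp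
  have "dvec (Gamma1 m) = map2 (+) A B"
  proof (rule nth_equalityI)
    show "length (dvec (Gamma1 m)) = length (map2 (+) A B)" using lA lB lG by simp
    fix i assume "i < length (dvec (Gamma1 m))"
    hence i: "i < t" using lG by simp
    have l: "dvec (Gamma1 m) ! i = dcube (h1 + 1 + i)" unfolding Geq using i by (intro dvec_upt_nth) simp
    have r1: "A ! i = dcube (h4 + 1 + i)" unfolding A_def using i h14 by (intro dvec_upt_nth) simp
    have r2: "B ! i = (if a \<le> i \<and> i < a + b then 1 else 0)" unfolding B_def using i ab F4
      by (simp add: nth_append) arith
    have rec: "dcube (h1 + 1 + i) = dcube (h1 + 1 + i - trib (m - 1)) +
      (if ff (m-4) + 3 * trib (m-4) \<le> h1 + 1 + i + 1 \<and> h1 + 1 + i + 1 \<le> ff (m-4) + ll (m-4) then 1 else 0)"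
      by (rule recursion) (use m i hm in \<open>simp_all add: h1_def t_def\<close>)
    have c1: "h1 + 1 + i - trib (m - 1) = h4 + 1 + i" using h14 t_def by simp
    have c2: "(ff (m-4) + 3 * trib (m-4) \<le> h1 + 1 + i + 1 \<and> h1 + 1 + i + 1 \<le> ff (m-4) + ll (m-4))
       \<longleftrightarrow> (a \<le> i \<and> i < a + b)"
      using ageq bgeq ab unfolding t4_def by linarith
    have "map2 (+) A B ! i = A ! i + B ! i" using i lA lB by simp
    thus "dvec (Gamma1 m) ! i = map2 (+) A B ! i" using l r1 r2 rec c1 c2 by simp
  qed
  thus ?thesis unfolding Let_def Aeq na nb unfolding t2_def[symmetric] t3_def[symmetric] A_def[symmetric] B_def[symmetric]
    using lA lB by simp
qed

theorem mainTheorem8: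
  shows "(\<forall>n \<le> 51. dcube n = 0)
    \<and> Gamma1 7 = [52..<96]
    \<and> dvec (Gamma1 7) = replicate 6 0 @ [1] @ replicate 37 0
    \<and> Gamma1 8 = [96..<177]
    \<and> dvec (Gamma1 8) = replicate 11 0 @ [1, 1] @ replicate 30 0 @ [1] @ replicate 37 0
    \<and> Gamma1 9 = [177..<326]
    \<and> dvec (Gamma1 9) = replicate 20 0 @ replicate 4 1 @ replicate 6 0 @ [1]
          @ replicate 48 0 @ [1, 1] @ replicate 30 0 @ [1] @ replicate 37 0
    \<and> (\<forall>m \<ge> 10.
         (let A = dvec (Gamma1 (m - 3)) @ dvec (Gamma1 (m - 2)) @ dvec (Gamma1 (m - 1));
              B = replicate (nat ((- int (trib (m - 2)) + 5 * int (trib (m - 4)) + 1) div 2)) 0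
                  @ replicate (nat ((int (trib (m - 2)) - 3 * int (trib (m - 4)) - 1) div 2)) 1
                  @ replicate (trib (m - 2) + trib (m - 3)) 0
          in length A = length B \<and> dvec (Gamma1 m) = map2 (+) A B))"
proof (intro conjI allI impI)
  fix n :: nat assume "n \<le> 51" thus "dcube n = 0" by (intro dcube_small) simp
next
  show "Gamma1 7 = [52..<96]" using Gamma1_hh[of 7] hh_6 hh_7 by simp
next
  show "Gamma1 8 = [96..<177]" using Gamma1_hh[of 8] hh_7 hh_8 by simp
next
  show "Gamma1 9 = [177..<326]" using Gamma1_hh[of 9] hh_8 hh_9 by simp
next
  fix m :: nat assume "10 \<le> m" thus "let A = dvec (Gamma1 (m - 3)) @ dvec (Gamma1 (m - 2)) @ dvec (Gamma1 (m - 1));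
              B = replicate (nat ((- int (trib (m - 2)) + 5 * int (trib (m - 4)) + 1) div 2)) 0
                  @ replicate (nat ((int (trib (m - 2)) - 3 * int (trib (m - 4)) - 1) div 2)) 1
                  @ replicate (trib (m - 2) + trib (m - 3)) 0
          in length A = length B \<and> dvec (Gamma1 m) = map2 (+) A B" by (rule general)
qed (rule part7 part8 part9)+


end
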